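(* Let $m,n\ge 1$. For $i=1,\ldots,m$ let $f_i:\mathbb{R}^n\to\mathbb{R}$ be convex and let $h_i:\mathbb{R}^n\to\mathbb{R}$ be convex and differentiable with $\nabla h_i$ Lipschitz continuous with constant $L_i>0$; put $F_i:=f_i+h_i$ and $F:=\sum_{i=1}^m F_i$. Let $g:\mathbb{R}^n\to\mathbb{R}$ be convex and differentiable with $\nabla g$ Lipschitz continuous with constant $L_g>0$, and assume $\min g=0$. Let $\mathcal{S}$ be the solution set of the problem $\min\{F(x): x\in\arg\min g\}$, and assume $\mathcal{S}\neq\emptyset$. Let $(\alpha_k)_{k\ge1}$, $(\beta_k)_{k\ge1}$ be positive sequences, $x_1\in\mathbb{R}^n$ arbitrary, and for $k\ge1$ define $$\varphi_{1,k}:=x_k-\alpha_k\beta_k\nabla g(x_k),\qquad \varphi_{i+1,k}:=\operatorname{prox}_{\alpha_k f_i}\big(\varphi_{i,k}-\alpha_k\nabla h_i(\varphi_{i,k})\big)\ (i=1,\ldots,m),\qquad x_{k+1}:=\varphi_{m+1,k}.$$ Assume: (H1) $\partial\big(\sum_{i=1}^m f_i+\delta_{\arg\min g}\big)=\sum_{i=1}^m\partial f_i+N_{\arg\min g}$; (H2) $\sum_{k=1}^\infty\alpha_k=+\infty$ and $\sum_{k=1}^\infty\alpha_k^2<+\infty$; (H3) $0<\liminf_{k\to\infty}\alpha_k\beta_k\le\limsup_{k\to\infty}\alpha_k\beta_k<\frac{2}{L_g}$; (H4) for every $p\in\operatorname{ran}(N_{\arg\min g})$, $\sum_{k=1}^\infty\alpha_k\beta_k\Big[g^*\big(\tfrac{p}{\beta_k}\big)-\sigma_{\arg\min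 g}\big(\tfrac{p}{\beta_k}\big)\Big]<+\infty$. Then the sequence $(x_k)_{k\ge1}$ converges to a point in $\mathcal{S}$.
   Context: For $r>0$ and convex $f:\mathbb{R}^n\to\mathbb{R}$, $\operatorname{prox}_{rf}(x)$ is the unique minimizer of $u\mapsto f(u)+\frac{1}{2r}\|u-x\|^2$. $g^*(u)=\sup_x\{\langle u,x\rangle-g(x)\}$ is the Fenchel conjugate. For a nonempty set $X$, $\delta_X$ is its indicator function ($0$ on $X$, $+\infty$ otherwise), $N_X(x)=\{u:\langle u,y-x\rangle\le0\ \forall y\in X\}$ for $x\in X$ (empty otherwise) is the normal cone, $\operatorname{ran}(N_X)=\bigcup_{x\in X}N_X(x)$, and $\sigma_X(u)=\sup_{y\in X}\langle y,u\rangle$ is the support function. $\partial$ denotes the convex subdifferential. *)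

theory Defs
  imports "HOL-Analysis.Analysis"
begin

definition argmin_set :: "('a \<Rightarrow> real) \<Rightarrow> 'a set" where
  "argmin_set g = {x. \<forall>y. g x \<le> g y}"

text \<open>Proximal operator: the (unique, for convex f and r > 0) minimizer of
  u \<mapsto> f u + 1/(2r) |u - x|^2.\<close>
definition prox :: "real \<Rightarrow> ('a::real_normed_vector \<Rightarrow> real) \<Rightarrow> 'a \<Rightarrow> 'a" where
  "prox r f x = (THE u. \<forall>v. f u + (norm (u - x))\<^sup>2 / (2 * r) \<le> f v + (norm (v - x))\<^sup>2 / (2 * r))"

definition fenchel_conj :: "('a::real_inner \<Rightarrow> real) \<Rightarrow> 'a \<Rightarrow> ereal" where
  "fenchel_conj g u = (SUP x. ereal (inner u x - g x))"

definition support_fun :: "'a::real_inner set \<Rightarrow> 'a \<Rightarrow> ereal" where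
  "support_fun X u = (SUP y\<in>X. ereal (inner y u))"

definition indicator_fun :: "'a set \<Rightarrow> 'a \<Rightarrow> ereal" where
  "indicator_fun X x = (if x \<in> X then 0 else \<infinity>)"

definition normal_cone :: "'a::real_inner set \<Rightarrow> 'a \<Rightarrow> 'a set" where
  "normal_cone X x = (if x \<in> X then {u. \<forall>y\<in>X. inner u (y - x) \<le> 0} else {})"

definition normal_cone_range :: "'a::real_inner set \<Rightarrow> 'a set" where
  "normal_cone_range X = (\<Union>x\<in>X. normal_cone X x)"

definition subdiff :: "('a::real_inner \<Rightarrow> ereal) \<Rightarrow> 'a \<Rightarrow> 'a set" where
  "subdiff f x = {u. f x \<noteq> \<infinity> \<and> (\<forall>y. f x + ereal (inner u (y - x)) \<le> f y)}"

end

theory Submission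
  imports Defs
begin

lemma grad_ineq:
  fixes f :: "'a::real_inner \<Rightarrow> real"
  assumes cv: "convex_on UNIV f" and d: "GDERIV f x :> D"
  shows "f x + inner D (y - x) \<le> f y"
proof -
  let ?d = "y - x"
  have hd: "(f has_derivative (\<lambda>h. inner h D)) (at x)" using d by (simp add: gderiv_def)
  have l: "((\<lambda>t. x + t *\<^sub>R ?d) has_derivative (\<lambda>t. t *\<^sub>R ?d)) (at 0)"
    by (auto intro!: derivative_eq_intros)
  have "((\<lambda>t. f (x + t *\<^sub>R ?d)) has_derivative (\<lambda>t. inner (t *\<^sub>R ?d) D)) (at 0)"
  proof -
    have hd': "(f has_derivative (\<lambda>h. inner h D)) (at (x + 0 *\<^sub>R ?d))" using hd by simp
    show ?thesis using has_derivative_compose[OF l hd'] by simp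
  qed
  hence "((\<lambda>t. f (x + t *\<^sub>R ?d)) has_real_derivative (inner ?d D)) (at 0)"
  proof -
    assume a: "((\<lambda>t. f (x + t *\<^sub>R ?d)) has_derivative (\<lambda>t. inner (t *\<^sub>R ?d) D)) (at 0)"
    have e: "(\<lambda>t. inner (t *\<^sub>R ?d) D) = (*) (inner ?d D)" by (auto simp: fun_eq_iff)
    show ?thesis using a unfolding has_field_derivative_def e .
  qed
  hence lim: "((\<lambda>t. (f (x + t *\<^sub>R ?d) - f x) / t) \<longlongrightarrow> inner ?d D) (at_right 0)"
    unfolding DERIV_def by (simp add: filterlim_at_split)
  have ev: "\<forall>\<^sub>F t in at_right 0. (f (x + t *\<^sub>R ?d) - f x) / t \<le> f y - f x"
  proof -
    have "\<forall>\<^sub>F t in at_right (0::real). 0 < t \<and> t < 1"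
      by (simp add: eventually_at_right_less eventually_conj eventually_at_right_field) (metis zero_less_one)
    thus ?thesis
    proof (rule eventually_mono)
      fix t :: real assume t: "0 < t \<and> t < 1"
      have "f (x + t *\<^sub>R ?d) = f ((1 - t) *\<^sub>R x + t *\<^sub>R y)" by (simp add: algebra_simps)
      also have "\<dots> \<le> (1 - t) * f x + t * f y"
        using cv t by (intro convex_onD) auto
      finally show "(f (x + t *\<^sub>R ?d) - f x) / t \<le> f y - f x"
        using t by (simp add: divide_simps algebra_simps)
    qed
  qed
  have "inner ?d D \<le> f y - f x"
    by (rule tendsto_upperbound[OF lim ev]) simp
  thus ?thesis by (simp add: inner_commute)
qed

lemma line_deriv:
  fixes f :: "'a::real_inner \<Rightarrow> real"
  assumes d: "GDERIV f (x + t *\<^sub>R v) :> D"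
  shows "((\<lambda>s. f (x + s *\<^sub>R v)) has_real_derivative (inner v D)) (at t)"
proof -
  have hd: "(f has_derivative (\<lambda>h. inner h D)) (at (x + t *\<^sub>R v))" using d by (simp add: gderiv_def)
  have l: "((\<lambda>s. x + s *\<^sub>R v) has_derivative (\<lambda>s. s *\<^sub>R v)) (at t)"
    by (auto intro!: derivative_eq_intros)
  have a: "((\<lambda>s. f (x + s *\<^sub>R v)) has_derivative (\<lambda>s. inner (s *\<^sub>R v) D)) (at t)"
    using has_derivative_compose[OF l hd] by simp
  have e: "(\<lambda>s. inner (s *\<^sub>R v) D) = (*) (inner v D)" by (auto simp: fun_eq_iff)
  show ?thesis using a unfolding has_field_derivative_def e .
qed

lemma descent:
  fixes f :: "'a::real_inner \<Rightarrow> real"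
  assumes d: "\<And>y. GDERIV f y :> G y" and lip: "L-lipschitz_on UNIV G"
  shows "f y \<le> f x + inner (G x) (y - x) + L / 2 * (norm (y - x))\<^sup>2"
proof -
  define v where "v = y - x"
  define \<psi> where "\<psi> t = f (x + t *\<^sub>R v) - t * inner (G x) v - L / 2 * t\<^sup>2 * (norm v)\<^sup>2" for t
  have D: "(\<psi> has_real_derivative (inner v (G (x + t *\<^sub>R v)) - inner (G x) v - L * t * (norm v)\<^sup>2)) (at t)" for t
    unfolding \<psi>_def
    by (rule derivative_eq_intros line_deriv[OF d] refl | simp)+
  obtain c where c: "0 < c" "c < 1"
    and eq: "\<psi> 1 - \<psi> 0 = (1 - 0) * (inner v (G (x + c *\<^sub>R v)) - inner (G x) v - L * c * (norm v)\<^sup>2)"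
    using MVT2[of 0 1 \<psi>] D by force
  have L0: "L \<ge> 0" using lip by (simp add: lipschitz_on_def)
  have "inner v (G (x + c *\<^sub>R v)) - inner (G x) v = inner v (G (x + c *\<^sub>R v) - G x)"
    by (simp add: inner_diff_right inner_commute)
  also have "\<dots> \<le> norm v * norm (G (x + c *\<^sub>R v) - G x)"
    by (rule order_trans[OF _ Cauchy_Schwarz_ineq2]) simp
  also have "norm (G (x + c *\<^sub>R v) - G x) \<le> L * norm (c *\<^sub>R v)"
    using lip unfolding lipschitz_on_def dist_norm by (metis UNIV_I add_diff_cancel_left')
  hence "norm v * norm (G (x + c *\<^sub>R v) - G x) \<le> norm v * (L * norm (c *\<^sub>R v))"
    by (simp add: mult_left_mono)
  also have "\<dots> = L * c * (norm v)\<^sup>2" using c by (simp add: power2_eq_square)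
  finally have "\<psi> 1 - \<psi> 0 \<le> 0" using eq by simp
  thus ?thesis unfolding \<psi>_def v_def by simp
qed


lemma nn: "norm (x::'a::real_inner) * norm x = inner x x"
  by (metis power2_eq_square power2_norm_eq_inner)

locale smoothg =
  fixes g :: "'a::real_inner \<Rightarrow> real" and G :: "'a \<Rightarrow> 'a" and L :: real
  assumes cv: "convex_on UNIV g" and d: "\<And>y. GDERIV g y :> G y"
    and lip: "L-lipschitz_on UNIV G" and Lpos: "L > 0" and nonneg: "\<And>y. 0 \<le> g y"
begin

lemma grad_zero: assumes "g z = 0" shows "G z = 0"
proof -
  have "g (z - (1/L) *\<^sub>R G z) \<le> g z + inner (G z) (z - (1/L) *\<^sub>R G z - z) + L / 2 * (norm (z - (1/L) *\<^sub>R G z - z))\<^sup>2"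
    by (rule descent[OF d lip])
  also have "\<dots> = - (1/(2*L)) * (norm (G z))\<^sup>2"
    using assms Lpos by (simp add: inner_diff_right power2_norm_eq_inner power2_eq_square field_simps nn)
  finally have "(1/(2*L)) * (norm (G z))\<^sup>2 \<le> 0" using nonneg[of "z - (1/L) *\<^sub>R G z"] by linarith
  hence "(norm (G z))\<^sup>2 \<le> 0" using Lpos by (simp add: divide_le_0_iff)
  thus ?thesis by simp
qed

lemma g_ge_grad: "(norm (G x))\<^sup>2 / (2 * L) \<le> g x"
proof -
  have "g (x - (1/L) *\<^sub>R G x) \<le> g x + inner (G x) (x - (1/L) *\<^sub>R G x - x) + L / 2 * (norm (x - (1/L) *\<^sub>R G x - x))\<^sup>2"
    by (rule descent[OF d lip])
  also have "\<dots> = g x - (norm (G x))\<^sup>2 / (2 * L)"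
    using Lpos by (simp add: inner_diff_right power2_norm_eq_inner power2_eq_square field_simps nn)
  finally show ?thesis using nonneg[of "x - (1/L) *\<^sub>R G x"] by linarith
qed

lemma coco: assumes "g z = 0" shows "g x + (norm (G x))\<^sup>2 / (2 * L) \<le> inner (G x) (x - z)"
proof -
  define w where "w = z + (1/L) *\<^sub>R G x"
  have a: "g x + inner (G x) (w - x) \<le> g w" by (rule grad_ineq[OF cv d])
  have "g w \<le> g z + inner (G z) (w - z) + L / 2 * (norm (w - z))\<^sup>2"
    by (rule descent[OF d lip])
  also have "\<dots> = (norm (G x))\<^sup>2 / (2 * L)"
    using Lpos assms grad_zero[OF assms] unfolding w_def by (simp add: power2_eq_square field_simps)
  finally have "g x + inner (G x) (w - x) \<le> (norm (G x))\<^sup>2 / (2 * L)" using a by linarith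
  moreover have "inner (G x) (w - x) = inner (G x) (z - x) + (norm (G x))\<^sup>2 / L"
    unfolding w_def by (simp add: inner_diff_right inner_add_right power2_norm_eq_inner)
  ultimately show ?thesis by (simp add: inner_diff_right field_simps)
qed

lemma penalty_step:
  assumes z: "g z = 0" and th: "0 < \<theta>" "\<theta> \<le> 1" and ga: "0 < \<gamma>" "\<gamma> \<le> 2 * (1 - \<theta>) / L"
  shows "(norm (x - \<gamma> *\<^sub>R G x - z))\<^sup>2 \<le> (norm (x - z))\<^sup>2 - 2 * \<gamma> * \<theta> * g x - \<gamma> * \<theta> / L * (norm (G x))\<^sup>2"
proof -
  define N where "N = (norm (G x))\<^sup>2"
  have N0: "N \<ge> 0" unfolding N_def by simp
  have e: "(norm (x - \<gamma> *\<^sub>R G x - z))\<^sup>2 = (norm (x - z))\<^sup>2 - 2 * \<gamma> * inner (G x) (x - z) + \<gamma>\<^sup>2 * N"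
    unfolding N_def power2_norm_eq_inner
    by (simp add: inner_diff_left inner_diff_right inner_commute algebra_simps power2_eq_square)
  have c: "g x + N / (2 * L) \<le> inner (G x) (x - z)" using coco[OF z] unfolding N_def .
  have gg: "N / (2 * L) \<le> g x" using g_ge_grad unfolding N_def .
  define I where "I = inner (G x) (x - z)"
  have "\<gamma> * L \<le> 2 * (1 - \<theta>)" using ga Lpos by (simp add: field_simps)
  hence "(\<gamma> * N) * (\<gamma> * L) \<le> (\<gamma> * N) * (2 * (1 - \<theta>))" using ga N0
    by (intro mult_left_mono) auto
  hence h2: "L * N * \<gamma>\<^sup>2 \<le> 2 * N * \<gamma> - 2 * N * \<gamma> * \<theta>" by (simp add: algebra_simps power2_eq_square)
  have "2 * L * \<gamma> * (g x + N / (2 * L)) \<le> 2 * L * \<gamma> * I" unfolding I_def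
    using c ga Lpos by (intro mult_left_mono) auto
  hence h1: "\<gamma> * N + 2 * L * \<gamma> * g x \<le> 2 * L * \<gamma> * I" using Lpos by (simp add: algebra_simps)
  have "N \<le> 2 * L * g x" using gg Lpos by (simp add: field_simps)
  hence "(\<gamma> * (1 - \<theta>)) * N \<le> (\<gamma> * (1 - \<theta>)) * (2 * L * g x)" using ga th by (intro mult_left_mono) auto
  hence h3: "\<gamma> * N - \<gamma> * N * \<theta> \<le> 2 * L * \<gamma> * g x - 2 * L * \<gamma> * g x * \<theta>" by (simp add: algebra_simps)
  have "- 2 * L * \<gamma> * I + L * \<gamma>\<^sup>2 * N \<le> - 2 * L * \<gamma> * \<theta> * g x - \<gamma> * \<theta> * N"
    using h1 h2 h3 by (simp add: algebra_simps)
  hence "L * (- 2 * \<gamma> * I + \<gamma>\<^sup>2 * N) \<le> L * (- 2 * \<gamma> * \<theta> * g x - \<gamma> * \<theta> / L * N)"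
    using Lpos by (simp add: algebra_simps)
  hence "- 2 * \<gamma> * inner (G x) (x - z) + \<gamma>\<^sup>2 * N \<le> - 2 * \<gamma> * \<theta> * g x - \<gamma> * \<theta> / L * N"
    using Lpos unfolding I_def by (simp add: mult_le_cancel_left_pos)
  thus ?thesis using e unfolding N_def by linarith
qed

end

lemma prox_exists:
  fixes f :: "'a::euclidean_space \<Rightarrow> real"
  assumes cv: "convex_on UNIV f" and r: "r > 0"
  shows "\<exists>u. \<forall>v. f u + (norm (u - x))\<^sup>2 / (2 * r) \<le> f v + (norm (v - x))\<^sup>2 / (2 * r)"
proof -
  define \<Phi> where "\<Phi> u = f u + (norm (u - x))\<^sup>2 / (2 * r)" for u
  have cf: "continuous_on UNIV f" by (rule convex_on_continuous[OF open_UNIV cv])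
  have cPhi: "continuous_on A \<Phi>" for A unfolding \<Phi>_def
    using r by (intro continuous_intros continuous_on_subset[OF cf]) auto
  obtain w where w: "w \<in> cball x 1" "\<And>y. y \<in> cball x 1 \<Longrightarrow> f w \<le> f y"
    using continuous_attains_inf[of "cball x 1" f] continuous_on_subset[OF cf] by force
  define c where "c = f x - f w"
  have c0: "c \<ge> 0" using w(2)[of x] unfolding c_def by simp
  have low: "f u \<ge> f x - norm (u - x) * c" if t1: "norm (u - x) \<ge> 1" for u
  proof -
    define t where "t = norm (u - x)"
    have t: "t \<ge> 1" using t1 t_def by simp
    define q where "q = x + (1/t) *\<^sub>R (u - x)"
    have ux: "u \<noteq> x" using t1 by auto
    have "dist x q = 1" unfolding q_def dist_norm t_def using t t_def ux by simp
    hence "f w \<le> f q" using w(2)[of q] by simp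
    also have "q = (1 - 1/t) *\<^sub>R x + (1/t) *\<^sub>R u" unfolding q_def by (simp add: algebra_simps)
    also have "f \<dots> \<le> (1 - 1/t) * f x + (1/t) * f u"
      using t by (intro convex_onD[OF cv]) (auto simp: field_simps)
    finally have "t * f w \<le> t * ((1 - 1/t) * f x + (1/t) * f u)" using t by simp
    moreover have "t * ((1 - 1/t) * f x + (1/t) * f u) = (t - 1) * f x + f u"
    proof -
      have "t * (1 - 1/t) = t - 1" "t * (1/t) = 1" using t by (simp_all add: right_diff_distrib)
      thus ?thesis using t by (simp add: distrib_left mult.assoc[symmetric])
    qed
    ultimately have "t * f w \<le> (t - 1) * f x + f u" by simp
    thus ?thesis unfolding c_def t_def[symmetric] by (simp add: algebra_simps)
  qed
  define R where "R = max 1 (2 * r * c + 1)"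
  obtain u where u: "u \<in> cball x R" "\<And>y. y \<in> cball x R \<Longrightarrow> \<Phi> u \<le> \<Phi> y"
    using continuous_attains_inf[of "cball x R" \<Phi>] cPhi unfolding R_def by force
  have "\<Phi> u \<le> \<Phi> v" for v
  proof (cases "v \<in> cball x R")
    case True thus ?thesis using u by simp
  next
    case False
    define t where "t = norm (v - x)"
    have tR: "t > R" using False unfolding t_def by (simp add: dist_norm norm_minus_commute)
    have "R \<ge> 1" unfolding R_def by simp
    hence l: "f v \<ge> f x - t * c" using low[of v] tR unfolding t_def by simp
    have "t > 2 * r * c" using tR unfolding R_def by simp
    hence "t * t / (2 * r) > t * c" using r tR \<open>R \<ge> 1\<close> by (simp add: field_simps)
    hence "\<Phi> v > f x" unfolding \<Phi>_def using l t_def by (simp add: power2_eq_square)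
    moreover have "\<Phi> x = f x" unfolding \<Phi>_def by simp
    moreover have "\<Phi> u \<le> \<Phi> x" using u(2)[of x] \<open>R \<ge> 1\<close> by simp
    ultimately show ?thesis by simp
  qed
  thus ?thesis unfolding \<Phi>_def by blast
qed

lemma prox_unique:
  fixes f :: "'a::real_inner \<Rightarrow> real"
  assumes cv: "convex_on UNIV f" and r: "r > 0"
    and u1: "\<forall>v. f u1 + (norm (u1 - x))\<^sup>2 / (2 * r) \<le> f v + (norm (v - x))\<^sup>2 / (2 * r)"
    and u2: "\<forall>v. f u2 + (norm (u2 - x))\<^sup>2 / (2 * r) \<le> f v + (norm (v - x))\<^sup>2 / (2 * r)"
  shows "u1 = u2"
proof (rule ccontr)
  assume ne: "u1 \<noteq> u2"
  define m where "m = (1/2) *\<^sub>R u1 + (1/2) *\<^sub>R u2"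
  have fm: "f m \<le> (1/2) * f u1 + (1/2) * f u2" unfolding m_def using convex_onD[OF cv, of "1/2" u1 u2] by simp
  have par: "(norm (m - x))\<^sup>2 = (1/2) * (norm (u1 - x))\<^sup>2 + (1/2) * (norm (u2 - x))\<^sup>2 - (1/4) * (norm (u1 - u2))\<^sup>2"
    unfolding m_def power2_norm_eq_inner
    by (simp add: inner_add_left inner_add_right inner_diff_left inner_diff_right inner_commute algebra_simps)
  have pos: "(norm (u1 - u2))\<^sup>2 > 0" using ne by simp
  have e1: "f u1 + (norm (u1 - x))\<^sup>2 / (2 * r) \<le> f m + (norm (m - x))\<^sup>2 / (2 * r)" using u1 by blast
  have e2: "f u2 + (norm (u2 - x))\<^sup>2 / (2 * r) \<le> f m + (norm (m - x))\<^sup>2 / (2 * r)" using u2 by blast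
  have "(norm (u1 - u2))\<^sup>2 / (2 * r) > 0" using pos r by simp
  moreover have "(norm (m - x))\<^sup>2 / (2 * r) = (1/2) * ((norm (u1 - x))\<^sup>2 / (2 * r)) + (1/2) * ((norm (u2 - x))\<^sup>2 / (2 * r)) - (1/4) * ((norm (u1 - u2))\<^sup>2 / (2 * r))"
    unfolding par by (simp add: add_divide_distrib diff_divide_distrib)
  ultimately show False using e1 e2 fm by linarith
qed

lemma prox_min:
  fixes f :: "'a::euclidean_space \<Rightarrow> real"
  assumes cv: "convex_on UNIV f" and r: "r > 0"
  shows "\<forall>v. f (prox r f x) + (norm (prox r f x - x))\<^sup>2 / (2 * r) \<le> f v + (norm (v - x))\<^sup>2 / (2 * r)"
proof -
  obtain u where u: "\<forall>v. f u + (norm (u - x))\<^sup>2 / (2 * r) \<le> f v + (norm (v - x))\<^sup>2 / (2 * r)"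
    using prox_exists[OF cv r] by blast
  show ?thesis unfolding prox_def
    by (rule theI[of _ u]) (use u prox_unique[OF cv r] in blast)+
qed

lemma small_t:
  fixes a b :: real
  assumes "\<And>t. 0 < t \<Longrightarrow> t \<le> 1 \<Longrightarrow> a \<le> b + t * c"
  shows "a \<le> b"
proof (rule ccontr)
  assume "\<not> a \<le> b"
  hence d: "a - b > 0" by simp
  show False
  proof (cases "c \<le> 0")
    case True thus False using assms[of 1] d by simp
  next
    case False
    define t where "t = min 1 ((a - b) / (2 * c))"
    have t: "0 < t" "t \<le> 1" using d False unfolding t_def by auto
    have "t \<le> (a - b) / (2 * c)" unfolding t_def by simp
    hence "t * c \<le> (a - b) / (2 * c) * c" using False by (intro mult_right_mono) auto
    also have "\<dots> = (a - b) / 2" using False by simp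
    finally have "t * c \<le> (a - b) / 2" .
    thus False using assms[OF t] d by simp
  qed
qed

lemma prox_subgrad:
  fixes f :: "'a::euclidean_space \<Rightarrow> real"
  assumes cv: "convex_on UNIV f" and r: "r > 0" and p: "p = prox r f x"
  shows "f p + inner ((1/r) *\<^sub>R (x - p)) (v - p) \<le> f v"
proof -
  have mn: "\<And>w. f p + (norm (p - x))\<^sup>2 / (2 * r) \<le> f w + (norm (w - x))\<^sup>2 / (2 * r)"
    using prox_min[OF cv r] p by blast
  define d where "d = v - p"
  have "r * f p + inner (x - p) d \<le> r * f v + t * ((norm d)\<^sup>2 / 2)" if t: "0 < t" "t \<le> 1" for t
  proof -
    have "f (p + t *\<^sub>R d) = f ((1 - t) *\<^sub>R p + t *\<^sub>R v)" unfolding d_def by (simp add: algebra_simps)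
    also have "\<dots> \<le> (1 - t) * f p + t * f v" using t by (intro convex_onD[OF cv]) auto
    finally have cvx: "f (p + t *\<^sub>R d) \<le> (1 - t) * f p + t * f v" .
    have nq: "(norm (p + t *\<^sub>R d - x))\<^sup>2 = (norm (p - x))\<^sup>2 + 2 * t * inner (p - x) d + t\<^sup>2 * (norm d)\<^sup>2"
      unfolding power2_norm_eq_inner
      by (simp add: inner_add_left inner_add_right inner_diff_left inner_diff_right inner_commute algebra_simps power2_eq_square)
    have "f p + (norm (p - x))\<^sup>2 / (2 * r) \<le> f (p + t *\<^sub>R d) + (norm (p + t *\<^sub>R d - x))\<^sup>2 / (2 * r)"
      by (rule mn)
    hence "2 * r * (f p + (norm (p - x))\<^sup>2 / (2 * r)) \<le> 2 * r * (f (p + t *\<^sub>R d) + (norm (p + t *\<^sub>R d - x))\<^sup>2 / (2 * r))"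
      using r by (intro mult_left_mono) auto
    hence "2 * r * f p + (norm (p - x))\<^sup>2 \<le> 2 * r * f (p + t *\<^sub>R d) + (norm (p + t *\<^sub>R d - x))\<^sup>2"
      using r by (simp add: distrib_left)
    hence "2 * r * f p \<le> 2 * r * ((1 - t) * f p + t * f v) + 2 * t * inner (p - x) d + t\<^sup>2 * (norm d)\<^sup>2"
    proof -
      have "2 * r * f (p + t *\<^sub>R d) \<le> 2 * r * ((1 - t) * f p + t * f v)"
        using r cvx by (intro mult_left_mono) auto
      thus ?thesis using nq \<open>2 * r * f p + _ \<le> _\<close> by linarith
    qed
    hence "t * (2 * r * f p + 2 * inner (x - p) d) \<le> t * (2 * r * f v + t * (norm d)\<^sup>2)"
      by (simp add: algebra_simps inner_diff_left power2_eq_square)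
    hence "2 * r * f p + 2 * inner (x - p) d \<le> 2 * r * f v + t * (norm d)\<^sup>2"
      using t by simp
    thus ?thesis by simp
  qed
  hence "r * f p + inner (x - p) d \<le> r * f v" by (rule small_t)
  hence "r * (f p + inner ((1/r) *\<^sub>R (x - p)) d) \<le> r * f v" using r by (simp add: algebra_simps)
  thus ?thesis using r d_def by simp
qed

lemma qfejer:
  fixes a c e :: "nat \<Rightarrow> real"
  assumes a0: "\<And>n. 0 \<le> a n" and c0: "\<And>n. 0 \<le> c n" and e0: "\<And>n. 0 \<le> e n"
    and es: "summable e" and st: "\<And>n. a (Suc n) \<le> a n - c n + e n"
  shows "convergent a" "summable c"
proof -
  have ps: "(\<Sum>i<n. c i) \<le> a 0 - a n + (\<Sum>i<n. e i)" for n
  proof (induction n)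
    case 0 thus ?case by simp
  next
    case (Suc n) thus ?case using st[of n] by simp
  qed
  have se: "(\<Sum>i<n. e i) \<le> suminf e" for n using es e0 by (intro sum_le_suminf) auto
  have "(\<Sum>i<n. c i) \<le> a 0 + suminf e" for n using ps[of n] a0[of n] se[of n] by linarith
  thus "summable c" by (intro summableI_nonneg_bounded[OF c0])
  define u where "u n = a n + (suminf e - (\<Sum>i<n. e i))" for n
  have tl0: "suminf e - (\<Sum>i<n. e i) \<ge> 0" for n using se[of n] by simp
  have "decseq u" unfolding decseq_Suc_iff u_def using st c0 by (auto simp: algebra_simps) (smt (verit) st c0)
  moreover have "\<forall>i. 0 \<le> u i" unfolding u_def using a0 tl0 by (simp add: add_nonneg_nonneg)
  ultimately obtain l where l: "u \<longlonglongrightarrow> l" by (rule decseq_convergent)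
  have "(\<lambda>n. suminf e - (\<Sum>i<n. e i)) \<longlonglongrightarrow> suminf e - suminf e"
    by (intro tendsto_diff tendsto_const summable_LIMSEQ es)
  hence "(\<lambda>n. u n - (suminf e - (\<Sum>i<n. e i))) \<longlonglongrightarrow> l - 0"
    using l by (intro tendsto_diff) auto
  thus "convergent a" unfolding u_def convergent_def by auto
qed

lemma fb_step:
  fixes f h :: "'a::euclidean_space \<Rightarrow> real"
  assumes fc: "convex_on UNIV f" and hc: "convex_on UNIV h" and hd: "\<And>y. GDERIV h y :> H y"
    and lip: "L-lipschitz_on UNIV H" and al: "\<alpha> > 0"
    and p: "p = prox \<alpha> f (q - \<alpha> *\<^sub>R H q)"
  shows "(norm (p - z))\<^sup>2 \<le> (norm (q - z))\<^sup>2 - 2 * \<alpha> * ((f p + h p) - (f z + h z)) + (2 * \<alpha> * L - 1) * (norm (p - q))\<^sup>2"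
proof -
  define s where "s = (1/\<alpha>) *\<^sub>R ((q - \<alpha> *\<^sub>R H q) - p)"
  have sf: "f p + inner s (z - p) \<le> f z" unfolding s_def by (rule prox_subgrad[OF fc al p])
  have pq: "p = q - \<alpha> *\<^sub>R (H q + s)" unfolding s_def using al by (simp add: algebra_simps)
  define d where "d = H q + s"
  have id: "(norm (q - z))\<^sup>2 = (norm (p - z))\<^sup>2 + 2 * \<alpha> * inner d (p - z) + (norm (p - q))\<^sup>2"
  proof -
    have "q - z = (p - z) + \<alpha> *\<^sub>R d" "p - q = - (\<alpha> *\<^sub>R d)" using pq d_def by (simp_all add: algebra_simps)
    thus ?thesis unfolding power2_norm_eq_inner
      by (simp add: inner_add_left inner_add_right inner_commute algebra_simps power2_eq_square)
  qed
  have h1: "h q + inner (H q) (z - q) \<le> h z" by (rule grad_ineq[OF hc hd])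
  have h2: "h p + inner (H p) (q - p) \<le> h q" by (rule grad_ineq[OF hc hd])
  have "inner (H p - H q) (q - p) \<ge> - (L * (norm (p - q))\<^sup>2)"
  proof -
    have "\<bar>inner (H p - H q) (q - p)\<bar> \<le> norm (H p - H q) * norm (q - p)" by (rule Cauchy_Schwarz_ineq2)
    also have "norm (H p - H q) \<le> L * norm (p - q)"
      using lip unfolding lipschitz_on_def dist_norm by blast
    hence "norm (H p - H q) * norm (q - p) \<le> L * norm (p - q) * norm (q - p)" by (simp add: mult_right_mono)
    also have "\<dots> = L * (norm (p - q))\<^sup>2" by (simp add: norm_minus_commute power2_eq_square)
    finally show ?thesis by linarith
  qed
  hence "inner d (p - z) \<ge> (f p + h p) - (f z + h z) - L * (norm (p - q))\<^sup>2"
    using sf h1 h2 unfolding d_def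
    by (simp add: inner_add_left inner_diff_left inner_diff_right inner_commute algebra_simps)
  hence "2 * \<alpha> * inner d (p - z) \<ge> 2 * \<alpha> * ((f p + h p) - (f z + h z) - L * (norm (p - q))\<^sup>2)"
    using al by simp
  thus ?thesis using id by (simp add: algebra_simps)
qed

lemma normal_cone_scale:
  assumes "q \<in> normal_cone A z" "c \<ge> 0" shows "c *\<^sub>R q \<in> normal_cone A z"
proof -
  have "z \<in> A" "\<forall>y\<in>A. inner q (y - z) \<le> 0" using assms(1) unfolding normal_cone_def by (auto split: if_splits)
  thus ?thesis unfolding normal_cone_def using assms(2) by (auto simp: mult_nonneg_nonpos)
qed

lemma fench:
  fixes g :: "'a::real_inner \<Rightarrow> real"
  assumes u: "u \<in> normal_cone A z" and gz: "g z = 0"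
  shows "fenchel_conj g u - support_fun A u = \<infinity> \<or>
    (\<exists>t. fenchel_conj g u - support_fun A u = ereal t \<and> 0 \<le> t \<and> (\<forall>x. inner u (x - z) - g x \<le> t))"
proof -
  have zA: "z \<in> A" and nc: "\<forall>y\<in>A. inner u (y - z) \<le> 0" using u unfolding normal_cone_def by (auto split: if_splits)
  have sup: "support_fun A u = ereal (inner z u)"
    unfolding support_fun_def
  proof (rule antisym)
    show "(SUP y\<in>A. ereal (inner y u)) \<le> ereal (inner z u)"
    proof (rule SUP_least)
      fix y assume "y \<in> A"
      hence "inner u (y - z) \<le> 0" using nc by blast
      thus "ereal (inner y u) \<le> ereal (inner z u)" by (simp add: inner_diff_right inner_commute)
    qed
    show "ereal (inner z u) \<le> (SUP y\<in>A. ereal (inner y u))" using zA by (rule SUP_upper)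
  qed
  have fc: "ereal (inner u x - g x) \<le> fenchel_conj g u" for x
    unfolding fenchel_conj_def by (rule SUP_upper) simp
  have fz: "ereal (inner z u) \<le> fenchel_conj g u" using fc[of z] gz by (simp add: inner_commute)
  show ?thesis
  proof (cases "fenchel_conj g u")
    case (real c)
    have "\<forall>x. inner u (x - z) - g x \<le> c - inner z u"
      using fc real by (simp add: inner_diff_right inner_commute)
    moreover have "c - inner z u \<ge> 0" using fz real by simp
    ultimately show ?thesis using real sup by auto
  next
    case PInf thus ?thesis using sup by simp
  next
    case MInf thus ?thesis using fz by simp
  qed
qed

lemma optimality:
  fixes f h :: "nat \<Rightarrow> 'a::euclidean_space \<Rightarrow> real"
  assumes fc: "\<And>i. i \<in> I \<Longrightarrow> convex_on UNIV (f i)"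
    and hd: "\<And>i y. i \<in> I \<Longrightarrow> GDERIV (h i) y :> H i y"
    and A: "convex A" and zA: "z \<in> A"
    and zmin: "\<forall>y\<in>A. (\<Sum>i\<in>I. f i z + h i z) \<le> (\<Sum>i\<in>I. f i y + h i y)"
  shows "- (\<Sum>i\<in>I. H i z) \<in> subdiff (\<lambda>z. (\<Sum>i\<in>I. ereal (f i z)) + indicator_fun A z) z"
proof -
  define Ff where "Ff y = (\<Sum>i\<in>I. f i y)" for y
  define Hh where "Hh y = (\<Sum>i\<in>I. h i y)" for y
  define HH where "HH = (\<Sum>i\<in>I. H i z)"
  have gH: "GDERIV Hh y :> HH" if "y = z" for y
  proof -
    have "(Hh has_derivative (\<lambda>v. \<Sum>i\<in>I. inner v (H i z))) (at z)"
      unfolding Hh_def using hd by (intro has_derivative_sum) (auto simp: gderiv_def)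
    moreover have "(\<lambda>v. \<Sum>i\<in>I. inner v (H i z)) = (\<lambda>v. inner v HH)"
      unfolding HH_def by (simp add: inner_sum_right)
    ultimately show ?thesis unfolding gderiv_def that by simp
  qed
  have key: "Ff z - Ff y \<le> inner (y - z) HH" if yA: "y \<in> A" for y
  proof -
    let ?d = "y - z"
    have D: "((\<lambda>t. Hh (z + t *\<^sub>R ?d)) has_real_derivative (inner ?d HH)) (at 0)"
      by (rule line_deriv) (rule gH, simp)
    hence lim: "((\<lambda>t. (Hh (z + t *\<^sub>R ?d) - Hh z) / t) \<longlongrightarrow> inner ?d HH) (at_right 0)"
      unfolding DERIV_def by (simp add: filterlim_at_split)
    have ev: "\<forall>\<^sub>F t in at_right 0. Ff z - Ff y \<le> (Hh (z + t *\<^sub>R ?d) - Hh z) / t"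
    proof -
      have "\<forall>\<^sub>F t in at_right (0::real). 0 < t \<and> t < 1"
        by (simp add: eventually_at_right_less eventually_conj eventually_at_right_field) (metis zero_less_one)
      thus ?thesis
      proof (rule eventually_mono)
        fix t :: real assume t: "0 < t \<and> t < 1"
        have eq: "z + t *\<^sub>R ?d = (1 - t) *\<^sub>R z + t *\<^sub>R y" by (simp add: algebra_simps)
        have inA: "z + t *\<^sub>R ?d \<in> A" unfolding eq using A zA yA t by (simp add: convex_def)
        have "Ff (z + t *\<^sub>R ?d) \<le> (\<Sum>i\<in>I. (1 - t) * f i z + t * f i y)"
          unfolding Ff_def eq using t fc by (intro sum_mono convex_onD) auto
        also have "\<dots> = (1 - t) * Ff z + t * Ff y" unfolding Ff_def
          by (simp add: sum.distrib sum_distrib_left)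
        finally have cvx: "Ff (z + t *\<^sub>R ?d) \<le> (1 - t) * Ff z + t * Ff y" .
        have "Ff z + Hh z \<le> Ff (z + t *\<^sub>R ?d) + Hh (z + t *\<^sub>R ?d)"
          using zmin inA unfolding Ff_def Hh_def by (simp add: sum.distrib)
        hence "t * (Ff z - Ff y) \<le> Hh (z + t *\<^sub>R ?d) - Hh z" using cvx by (simp add: algebra_simps)
        thus "Ff z - Ff y \<le> (Hh (z + t *\<^sub>R ?d) - Hh z) / t" using t by (simp add: field_simps)
      qed
    qed
    show ?thesis by (rule tendsto_lowerbound[OF lim ev]) simp
  qed
  have fin: "(\<Sum>i\<in>I. ereal (f i y)) = ereal (Ff y)" for y unfolding Ff_def by simp
  show ?thesis unfolding subdiff_def HH_def[symmetric]
  proof (intro CollectI conjI allI)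
    show "(\<Sum>i\<in>I. ereal (f i z)) + indicator_fun A z \<noteq> \<infinity>"
      using zA by (simp add: fin indicator_fun_def)
    fix y
    show "(\<Sum>i\<in>I. ereal (f i z)) + indicator_fun A z + ereal (inner (- HH) (y - z))
        \<le> (\<Sum>i\<in>I. ereal (f i y)) + indicator_fun A y"
    proof (cases "y \<in> A")
      case True
      thus ?thesis using key[OF True] zA by (simp add: fin indicator_fun_def inner_commute Ff_def)
    next
      case False thus ?thesis by (simp add: fin indicator_fun_def)
    qed
  qed
qed

lemma sum_shift1: "(\<Sum>i<m. w (Suc i)) = (\<Sum>i\<in>{1..m}. (w i :: real))"
  by (induction m) (auto simp: atLeastAtMostSuc_conv)

lemma amgm: fixes a s d :: real assumes "d > 0" shows "2 * a * s \<le> a\<^sup>2 / d + d * s\<^sup>2"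
proof -
  have "0 \<le> (a - d * s)\<^sup>2 / d" using assms by simp
  also have "(a - d * s)\<^sup>2 / d = a\<^sup>2 / d - 2 * a * s + d * s\<^sup>2" using assms
    by (simp add: power2_eq_square field_simps)
  finally show ?thesis by simp
qed

locale setting =
  fixes m :: nat
    and f h :: "nat \<Rightarrow> 'a::euclidean_space \<Rightarrow> real"
    and gradh :: "nat \<Rightarrow> 'a \<Rightarrow> 'a"
    and L :: "nat \<Rightarrow> real"
    and g :: "'a \<Rightarrow> real" and gradg :: "'a \<Rightarrow> 'a" and Lg :: real
    and \<alpha> \<beta> :: "nat \<Rightarrow> real"
    and x :: "nat \<Rightarrow> 'a"
    and \<phi> :: "nat \<Rightarrow> nat \<Rightarrow> 'a"
  assumes m: "m \<ge> 1"
    and f_convex: "\<And>i. i \<in> {1..m} \<Longrightarrow> convex_on UNIV (f i)"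
    and h_convex: "\<And>i. i \<in> {1..m} \<Longrightarrow> convex_on UNIV (h i)"
    and h_grad: "\<And>i y. i \<in> {1..m} \<Longrightarrow> GDERIV (h i) y :> gradh i y"
    and h_lip: "\<And>i. i \<in> {1..m} \<Longrightarrow> L i > 0 \<and> (L i)-lipschitz_on UNIV (gradh i)"
    and g_convex: "convex_on UNIV g"
    and g_grad: "\<And>y. GDERIV g y :> gradg y"
    and g_lip: "Lg > 0" "Lg-lipschitz_on UNIV gradg"
    and g_min: "(\<exists>y. g y = 0) \<and> (\<forall>y. 0 \<le> g y)"
    and S_nonempty:
      "{z \<in> argmin_set g. \<forall>y \<in> argmin_set g.
          (\<Sum>i\<in>{1..m}. f i z + h i z) \<le> (\<Sum>i\<in>{1..m}. f i y + h i y)} \<noteq> {}"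
    and \<alpha>_pos: "\<And>k. k \<ge> 1 \<Longrightarrow> \<alpha> k > 0"
    and \<beta>_pos: "\<And>k. k \<ge> 1 \<Longrightarrow> \<beta> k > 0"
    and phi_1: "\<And>k. k \<ge> 1 \<Longrightarrow> \<phi> 1 k = x k - (\<alpha> k * \<beta> k) *\<^sub>R gradg (x k)"
    and phi_step: "\<And>i k. k \<ge> 1 \<Longrightarrow> i \<in> {1..m} \<Longrightarrow>
        \<phi> (i + 1) k = prox (\<alpha> k) (f i) (\<phi> i k - \<alpha> k *\<^sub>R gradh i (\<phi> i k))"
    and x_step: "\<And>k. k \<ge> 1 \<Longrightarrow> x (k + 1) = \<phi> (m + 1) k"
    and H1: "\<And>y. subdiff (\<lambda>z. (\<Sum>i\<in>{1..m}. ereal (f i z)) + indicator_fun (argmin_set g) z) y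
        = {(\<Sum>i\<in>{1..m}. u i) + p | u p. (\<forall>i\<in>{1..m}. u i \<in> subdiff (\<lambda>z. ereal (f i z)) y)
              \<and> p \<in> normal_cone (argmin_set g) y}"
    and H2: "\<not> summable (\<lambda>k. \<alpha> (k + 1))" "summable (\<lambda>k. (\<alpha> (k + 1))\<^sup>2)"
    and H3: "0 < liminf (\<lambda>k. ereal (\<alpha> k * \<beta> k))"
            "limsup (\<lambda>k. ereal (\<alpha> k * \<beta> k)) < ereal (2 / Lg)"
    and H4: "\<And>p. p \<in> normal_cone_range (argmin_set g) \<Longrightarrow>
        (\<Sum>k. ereal (\<alpha> (k + 1) * \<beta> (k + 1)) *
            (fenchel_conj g (p /\<^sub>R \<beta> (k + 1)) - support_fun (argmin_set g) (p /\<^sub>R \<beta> (k + 1)))) < \<infinity>"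
begin

abbreviation "A \<equiv> argmin_set g"
definition "Fs y = (\<Sum>i\<in>{1..m}. f i y + h i y)"
definition "S = {z \<in> A. \<forall>y\<in>A. Fs z \<le> Fs y}"
definition "\<gamma> k = \<alpha> k * \<beta> k"
definition "Ls = (\<Sum>i\<in>{1..m}. L i)"

lemma g_nonneg: "0 \<le> g y" using g_min by blast

lemma A_iff: "y \<in> A \<longleftrightarrow> g y = 0"
proof -
  obtain y0 where "g y0 = 0" using g_min by blast
  show ?thesis
  proof
    assume "y \<in> A"
    hence "g y \<le> g y0" unfolding argmin_set_def by blast
    thus "g y = 0" using \<open>g y0 = 0\<close> g_nonneg[of y] by linarith
  next
    assume "g y = 0"
    thus "y \<in> A" unfolding argmin_set_def using g_nonneg by simp
  qed
qed

lemma A_convex: "convex A"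
  unfolding convex_def
proof (intro ballI allI impI)
  fix u v and s t :: real assume "u \<in> A" "v \<in> A" "0 \<le> s" "0 \<le> t" "s + t = 1"
  hence "s = 1 - t" by simp
  hence "g (s *\<^sub>R u + t *\<^sub>R v) \<le> s * g u + t * g v"
    using convex_onD[OF g_convex, of t u v] \<open>0 \<le> s\<close> \<open>0 \<le> t\<close> by simp
  thus "s *\<^sub>R u + t *\<^sub>R v \<in> A" using \<open>u \<in> A\<close> \<open>v \<in> A\<close> g_nonneg A_iff by (simp add: antisym)
qed

sublocale sg: smoothg g gradg Lg
  by unfold_locales (use g_convex g_grad g_lip g_nonneg in auto)

lemma f_cont: "i \<in> {1..m} \<Longrightarrow> continuous_on UNIV (f i)"
  using convex_on_continuous[OF open_UNIV f_convex] by blast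
lemma h_cont: "i \<in> {1..m} \<Longrightarrow> continuous_on UNIV (h i)"
  using convex_on_continuous[OF open_UNIV h_convex] by blast
lemma g_cont: "continuous_on UNIV g"
  using convex_on_continuous[OF open_UNIV g_convex] by blast

lemma L_le_Ls: "i \<in> {1..m} \<Longrightarrow> L i \<le> Ls"
  unfolding Ls_def using h_lip by (intro member_le_sum) (auto simp: less_imp_le)

lemma alpha_zero: "\<alpha> \<longlonglongrightarrow> 0"
proof -
  have "(\<lambda>k. (\<alpha> (k + 1))\<^sup>2) \<longlonglongrightarrow> 0" by (rule summable_LIMSEQ_zero[OF H2(2)])
  hence "(\<lambda>k. sqrt ((\<alpha> (k + 1))\<^sup>2)) \<longlonglongrightarrow> sqrt 0" by (intro tendsto_intros)
  hence "(\<lambda>k. \<bar>\<alpha> (k + 1)\<bar>) \<longlonglongrightarrow> 0" by simp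
  hence "(\<lambda>k. \<alpha> (k + 1)) \<longlonglongrightarrow> 0" by (simp add: tendsto_rabs_zero_iff)
  thus ?thesis by (rule LIMSEQ_offset)
qed

lemma constants:
  obtains \<theta> K0 \<gamma>0 where "0 < \<theta>" "\<theta> \<le> 1/2" "K0 \<ge> 1" "\<gamma>0 > 0"
    "\<And>k. k \<ge> K0 \<Longrightarrow> \<gamma> k \<le> 2 * (1 - \<theta>) / Lg \<and> \<gamma>0 \<le> \<gamma> k \<and> \<alpha> k * Ls \<le> 1/4"
proof -
  obtain c where c: "limsup (\<lambda>k. ereal (\<alpha> k * \<beta> k)) < ereal c" "c < 2 / Lg"
    using ereal_dense2[OF H3(2)] by auto
  obtain c0 where c0: "0 < c0" "ereal c0 < liminf (\<lambda>k. ereal (\<alpha> k * \<beta> k))"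
    using ereal_dense2[OF H3(1)] by auto
  have e1: "\<forall>\<^sub>F k in sequentially. \<gamma> k < c"
    using Limsup_lessD[OF c(1)] unfolding \<gamma>_def by simp
  have e2: "\<forall>\<^sub>F k in sequentially. \<gamma> k > c0"
    using less_LiminfD[OF c0(2)] unfolding \<gamma>_def by simp
  have e3: "\<forall>\<^sub>F k in sequentially. \<alpha> k * Ls < 1/4"
  proof -
    have "(\<lambda>k. \<alpha> k * Ls) \<longlonglongrightarrow> 0" using tendsto_mult[OF alpha_zero tendsto_const[of Ls]] by simp
    from order_tendstoD(2)[OF this, of "1/4"] show ?thesis by simp
  qed
  obtain K where K: "\<And>k. k \<ge> K \<Longrightarrow> \<gamma> k < c \<and> \<gamma> k > c0 \<and> \<alpha> k * Ls < 1/4"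
    using eventually_conj[OF e1 eventually_conj[OF e2 e3]] unfolding eventually_sequentially by blast
  define \<theta> where "\<theta> = min (1/2) (1 - c * Lg / 2)"
  have cL: "c * Lg < 2" using c(2) g_lip(1) by (simp add: field_simps)
  have th: "0 < \<theta>" "\<theta> \<le> 1/2" unfolding \<theta>_def using cL by (auto simp: min_def)
  have "c \<le> 2 * (1 - \<theta>) / Lg"
  proof -
    have "1 - \<theta> \<ge> c * Lg / 2" unfolding \<theta>_def by (auto simp: min_def)
    hence "2 * (1 - \<theta>) \<ge> c * Lg" by simp
    thus ?thesis using g_lip(1) by (simp add: field_simps)
  qed
  show ?thesis
  proof (rule that[OF th, of "max K 1" c0])
    show "max K 1 \<ge> 1" by simp
    show "c0 > 0" by fact
    fix k assume "max K 1 \<le> k"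
    hence "k \<ge> K" by simp
    from K[OF this] have k: "\<gamma> k < c" "c0 < \<gamma> k" "\<alpha> k * Ls < 1/4" by auto
    have kk: "\<gamma> k \<le> 2 * (1 - \<theta>) / Lg" using k(1) \<open>c \<le> 2 * (1 - \<theta>) / Lg\<close> by linarith
    thus "\<gamma> k \<le> 2 * (1 - \<theta>) / Lg \<and> c0 \<le> \<gamma> k \<and> \<alpha> k * Ls \<le> 1 / 4"
      by (intro conjI kk less_imp_le[OF k(2)] less_imp_le[OF k(3)])
  qed
qed

end

context setting begin

definition "ph k j = (if j = 0 then x k else \<phi> j k)"
definition "Dk k = (\<Sum>j<m+1. (norm (ph k (Suc j) - ph k j))\<^sup>2)"
definition "Fphi k = (\<Sum>i\<in>{1..m}. f i (\<phi> (i+1) k) + h i (\<phi> (i+1) k))"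

lemma Dk_split: "Dk k = (norm (\<phi> 1 k - x k))\<^sup>2 + (\<Sum>i\<in>{1..m}. (norm (\<phi> (i+1) k - \<phi> i k))\<^sup>2)"
proof -
  have "Dk k = (norm (ph k 1 - ph k 0))\<^sup>2 + (\<Sum>i<m. (norm (ph k (Suc (Suc i)) - ph k (Suc i)))\<^sup>2)"
  proof -
    have e: "{..<m+1} = {..<Suc m}" by simp
    show ?thesis unfolding Dk_def e sum.lessThan_Suc_shift by simp
  qed
  also have "(\<Sum>i<m. (norm (ph k (Suc (Suc i)) - ph k (Suc i)))\<^sup>2) = (\<Sum>i\<in>{1..m}. (norm (ph k (Suc i) - ph k i))\<^sup>2)"
    by (rule sum_shift1[of "\<lambda>i. (norm (ph k (Suc i) - ph k i))\<^sup>2"])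
  also have "\<dots> = (\<Sum>i\<in>{1..m}. (norm (\<phi> (i+1) k - \<phi> i k))\<^sup>2)"
    by (rule sum.cong) (auto simp: ph_def)
  finally show ?thesis by (simp add: ph_def)
qed

lemma Dk_nonneg: "0 \<le> Dk k" unfolding Dk_def by (simp add: sum_nonneg)

lemma step_main:
  assumes k: "k \<ge> 1" and th: "0 < \<theta>" "\<theta> \<le> 1/2" and ga: "\<gamma> k \<le> 2 * (1 - \<theta>) / Lg"
    and al: "\<alpha> k * Ls \<le> 1/4" and zA: "z \<in> A"
  shows "(norm (x (k+1) - z))\<^sup>2 \<le> (norm (x k - z))\<^sup>2 - 2 * \<gamma> k * \<theta> * g (x k)
           - 2 * \<alpha> k * (Fphi k - Fs z) - \<theta> / 2 * Dk k"
proof -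
  have gz: "g z = 0" using zA A_iff by simp
  have apos: "\<alpha> k > 0" and bpos: "\<beta> k > 0" using \<alpha>_pos \<beta>_pos k by auto
  have gpos: "\<gamma> k > 0" unfolding \<gamma>_def using apos bpos by simp
  define N where "N = (norm (gradg (x k)))\<^sup>2"
  have phi1: "\<phi> 1 k = x k - \<gamma> k *\<^sub>R gradg (x k)" using phi_1[OF k] unfolding \<gamma>_def by simp
  have pen: "(norm (\<phi> 1 k - z))\<^sup>2 \<le> (norm (x k - z))\<^sup>2 - 2 * \<gamma> k * \<theta> * g (x k) - \<gamma> k * \<theta> / Lg * N"
    unfolding phi1 N_def using th by (intro sg.penalty_step[OF gz _ _ gpos ga]) auto
  have d1: "(norm (\<phi> 1 k - x k))\<^sup>2 = (\<gamma> k)\<^sup>2 * N"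
    unfolding phi1 N_def using gpos by (simp add: power_mult_distrib)
  have "\<gamma> k * Lg \<le> 2 * (1 - \<theta>)" using ga g_lip(1) pos_le_divide_eq by blast
  hence "\<gamma> k * Lg \<le> 2 - 2 * \<theta>" by (simp add: algebra_simps)
  hence "\<gamma> k * Lg \<le> 2" using th by linarith
  hence "\<theta> / 2 * ((\<gamma> k)\<^sup>2 * N) \<le> \<gamma> k * \<theta> / Lg * N"
  proof -
    assume gl: "\<gamma> k * Lg \<le> 2"
    have N0: "N \<ge> 0" unfolding N_def by simp
    have "\<theta> / 2 * ((\<gamma> k)\<^sup>2 * N) * Lg = (\<theta> * \<gamma> k * N / 2) * (\<gamma> k * Lg)" by (simp add: power2_eq_square algebra_simps)
    also have "\<dots> \<le> (\<theta> * \<gamma> k * N / 2) * 2" using gl th gpos N0 by (intro mult_left_mono) auto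
    also have "\<dots> = \<gamma> k * \<theta> / Lg * N * Lg" using g_lip(1) by simp
    finally show ?thesis using g_lip(1) by (rule mult_right_le_imp_le)
  qed
  hence pen2: "(norm (\<phi> 1 k - z))\<^sup>2 \<le> (norm (x k - z))\<^sup>2 - 2 * \<gamma> k * \<theta> * g (x k) - \<theta> / 2 * (norm (\<phi> 1 k - x k))\<^sup>2"
    unfolding d1 using pen by linarith
  define T where "T i = 2 * \<alpha> k * ((f i (\<phi> (i+1) k) + h i (\<phi> (i+1) k)) - (f i z + h i z)) + 1/2 * (norm (\<phi> (i+1) k - \<phi> i k))\<^sup>2" for i
  have chain: "n \<le> m \<Longrightarrow> (norm (\<phi> (n+1) k - z))\<^sup>2 \<le> (norm (\<phi> 1 k - z))\<^sup>2 - (\<Sum>i\<in>{1..n}. T i)" for n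
  proof (induction n)
    case 0 thus ?case by simp
  next
    case (Suc n)
    let ?i = "Suc n"
    have i: "?i \<in> {1..m}" using Suc.prems by simp
    have hl: "L ?i > 0" "(L ?i)-lipschitz_on UNIV (gradh ?i)" using h_lip[OF i] by auto
    have fb: "(norm (\<phi> (?i+1) k - z))\<^sup>2 \<le> (norm (\<phi> ?i k - z))\<^sup>2
       - 2 * \<alpha> k * ((f ?i (\<phi> (?i+1) k) + h ?i (\<phi> (?i+1) k)) - (f ?i z + h ?i z))
       + (2 * \<alpha> k * L ?i - 1) * (norm (\<phi> (?i+1) k - \<phi> ?i k))\<^sup>2"
      by (rule fb_step[OF f_convex[OF i] h_convex[OF i] h_grad[OF i] hl(2) apos phi_step[OF k i]])
    have "\<alpha> k * L ?i \<le> \<alpha> k * Ls" using L_le_Ls[OF i] apos by simp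
    hence "2 * \<alpha> k * L ?i - 1 \<le> - 1/2" using al by linarith
    hence "(2 * \<alpha> k * L ?i - 1) * (norm (\<phi> (?i+1) k - \<phi> ?i k))\<^sup>2 \<le> - 1/2 * (norm (\<phi> (?i+1) k - \<phi> ?i k))\<^sup>2"
      by (intro mult_right_mono) auto
    hence "(norm (\<phi> (?i+1) k - z))\<^sup>2 \<le> (norm (\<phi> ?i k - z))\<^sup>2 - T ?i" using fb unfolding T_def by simp
    moreover have "(norm (\<phi> ?i k - z))\<^sup>2 \<le> (norm (\<phi> 1 k - z))\<^sup>2 - (\<Sum>i\<in>{1..n}. T i)"
      using Suc by simp
    ultimately show ?case by simp
  qed
  have xk1: "x (k+1) = \<phi> (m+1) k" by (rule x_step[OF k])
  have sT: "(\<Sum>i\<in>{1..m}. T i) = 2 * \<alpha> k * (Fphi k - Fs z) + 1/2 * (\<Sum>i\<in>{1..m}. (norm (\<phi> (i+1) k - \<phi> i k))\<^sup>2)"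
  proof -
    have "(\<Sum>i\<in>{1..m}. T i) = (\<Sum>i\<in>{1..m}. 2 * \<alpha> k * ((f i (\<phi> (i+1) k) + h i (\<phi> (i+1) k)) - (f i z + h i z)))
        + (\<Sum>i\<in>{1..m}. 1/2 * (norm (\<phi> (i+1) k - \<phi> i k))\<^sup>2)"
      unfolding T_def by (rule sum.distrib)
    also have "(\<Sum>i\<in>{1..m}. 2 * \<alpha> k * ((f i (\<phi> (i+1) k) + h i (\<phi> (i+1) k)) - (f i z + h i z)))
        = 2 * \<alpha> k * (\<Sum>i\<in>{1..m}. (f i (\<phi> (i+1) k) + h i (\<phi> (i+1) k)) - (f i z + h i z))"
      by (rule sum_distrib_left[symmetric])
    also have "(\<Sum>i\<in>{1..m}. (f i (\<phi> (i+1) k) + h i (\<phi> (i+1) k)) - (f i z + h i z)) = Fphi k - Fs z"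
      unfolding Fphi_def Fs_def by (rule sum_subtractf)
    also have "(\<Sum>i\<in>{1..m}. 1/2 * (norm (\<phi> (i+1) k - \<phi> i k))\<^sup>2) = 1/2 * (\<Sum>i\<in>{1..m}. (norm (\<phi> (i+1) k - \<phi> i k))\<^sup>2)"
      by (rule sum_distrib_left[symmetric])
    finally show ?thesis .
  qed
  have "\<theta> / 2 * (\<Sum>i\<in>{1..m}. (norm (\<phi> (i+1) k - \<phi> i k))\<^sup>2) \<le> 1/2 * (\<Sum>i\<in>{1..m}. (norm (\<phi> (i+1) k - \<phi> i k))\<^sup>2)"
    using th by (intro mult_right_mono sum_nonneg) auto
  thus ?thesis using chain[of m] xk1 sT pen2 Dk_split[of k] by (simp add: algebra_simps)
qed

end

context setting begin

lemma e_bound: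
  assumes i: "i \<le> m"
  shows "norm (\<phi> (i+1) k - x k) \<le> (\<Sum>j<m+1. norm (ph k (Suc j) - ph k j))"
proof -
  have "\<phi> (i+1) k - x k = ph k (i+1) - ph k 0" by (simp add: ph_def)
  also have "\<dots> = (\<Sum>j<i+1. ph k (Suc j) - ph k j)" by (rule sum_lessThan_telescope[symmetric])
  finally have eq: "\<phi> (i+1) k - x k = (\<Sum>j<i+1. ph k (Suc j) - ph k j)" .
  have "norm (\<phi> (i+1) k - x k) \<le> (\<Sum>j<i+1. norm (ph k (Suc j) - ph k j))"
    unfolding eq by (rule norm_sum)
  also have "\<dots> \<le> (\<Sum>j<m+1. norm (ph k (Suc j) - ph k j))"
    using i by (intro sum_mono2) auto
  finally show ?thesis .
qed

lemma step_lower: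
  assumes k: "k \<ge> 1" and th: "0 < \<theta>" and zA: "z \<in> A"
    and usub: "\<And>i y. i \<in> {1..m} \<Longrightarrow> f i z + inner (u i) (y - z) \<le> f i y"
    and psum: "(\<Sum>i\<in>{1..m}. u i) + p = - (\<Sum>i\<in>{1..m}. gradh i z)"
    and tk: "\<And>y. inner (((2/\<theta>) *\<^sub>R p) /\<^sub>R \<beta> k) (y - z) - g y \<le> t"
  shows "0 \<le> \<gamma> k * \<theta> * g (x k) + 2 * \<alpha> k * (Fphi k - Fs z) + \<theta> / 4 * Dk k
     + (\<gamma> k * \<theta> * t + (m+1) * (\<alpha> k)\<^sup>2 * (\<Sum>i\<in>{1..m}. (norm (u i + gradh i z))\<^sup>2) / (\<theta> / (4 * m)))"
proof -
  define c where "c i = u i + gradh i z" for i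
  define C where "C = (\<Sum>i\<in>{1..m}. (norm (c i))\<^sup>2)"
  define \<delta> where "\<delta> = \<theta> / (4 * m)"
  define K where "K = (m+1) * (\<alpha> k)\<^sup>2 / \<delta>"
  have dpos: "\<delta> > 0" unfolding \<delta>_def using th m by simp
  have md: "m * \<delta> = \<theta> / 4" unfolding \<delta>_def using m by simp
  have apos: "\<alpha> k > 0" and bpos: "\<beta> k > 0" using \<alpha>_pos \<beta>_pos k by auto
  define e where "e i = \<phi> (i+1) k - x k" for i
  define E where "E = (\<Sum>j<m+1. norm (ph k (Suc j) - ph k j))"
  have csum: "(\<Sum>i\<in>{1..m}. c i) = - p"
  proof -
    have "(\<Sum>i\<in>{1..m}. c i) = (\<Sum>i\<in>{1..m}. u i) + (\<Sum>i\<in>{1..m}. gradh i z)"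
      unfolding c_def by (rule sum.distrib)
    also have "\<dots> = ((\<Sum>i\<in>{1..m}. u i) + p) + (\<Sum>i\<in>{1..m}. gradh i z) - p" by simp
    also have "\<dots> = - p" unfolding psum by simp
    finally show ?thesis .
  qed
  have sub: "inner (c i) (\<phi> (i+1) k - z) \<le> (f i (\<phi> (i+1) k) + h i (\<phi> (i+1) k)) - (f i z + h i z)"
    if i: "i \<in> {1..m}" for i
  proof -
    have a1: "f i z + inner (u i) (\<phi> (i+1) k - z) \<le> f i (\<phi> (i+1) k)" by (rule usub[OF i])
    have a2: "h i z + inner (gradh i z) (\<phi> (i+1) k - z) \<le> h i (\<phi> (i+1) k)"
      by (rule grad_ineq[OF h_convex[OF i] h_grad[OF i]])
    have "inner (c i) (\<phi> (i+1) k - z) = inner (u i) (\<phi> (i+1) k - z) + inner (gradh i z) (\<phi> (i+1) k - z)"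
      unfolding c_def by (rule inner_add_left)
    thus ?thesis using a1 a2 by linarith
  qed
  have r1: "(\<Sum>i\<in>{1..m}. inner (c i) (\<phi> (i+1) k - z)) \<le> Fphi k - Fs z"
  proof -
    have "(\<Sum>i\<in>{1..m}. inner (c i) (\<phi> (i+1) k - z)) \<le> (\<Sum>i\<in>{1..m}. (f i (\<phi> (i+1) k) + h i (\<phi> (i+1) k)) - (f i z + h i z))"
      by (rule sum_mono) (rule sub)
    also have "\<dots> = Fphi k - Fs z" unfolding Fphi_def Fs_def by (rule sum_subtractf)
    finally show ?thesis .
  qed
  have r2: "(\<Sum>i\<in>{1..m}. inner (c i) (\<phi> (i+1) k - z)) = - inner p (x k - z) + (\<Sum>i\<in>{1..m}. inner (c i) (e i))"
  proof -
    have "(\<Sum>i\<in>{1..m}. inner (c i) (\<phi> (i+1) k - z)) = (\<Sum>i\<in>{1..m}. inner (c i) (x k - z) + inner (c i) (e i))"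
    proof (rule sum.cong)
      fix i show "inner (c i) (\<phi> (i+1) k - z) = inner (c i) (x k - z) + inner (c i) (e i)"
        unfolding e_def inner_add_right[symmetric] by simp
    qed simp
    also have "\<dots> = (\<Sum>i\<in>{1..m}. inner (c i) (x k - z)) + (\<Sum>i\<in>{1..m}. inner (c i) (e i))"
      by (rule sum.distrib)
    also have "(\<Sum>i\<in>{1..m}. inner (c i) (x k - z)) = inner (\<Sum>i\<in>{1..m}. c i) (x k - z)"
      by (rule inner_sum_left[symmetric])
    also have "\<dots> = - inner p (x k - z)" unfolding csum by simp
    finally show ?thesis .
  qed
  have eb: "- (K * (norm (c i))\<^sup>2 + \<delta> * Dk k) \<le> 2 * \<alpha> k * inner (c i) (e i)"
    if i: "i \<in> {1..m}" for i
  proof -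
    have eE: "norm (e i) \<le> E" unfolding e_def E_def using i by (intro e_bound) auto
    have "- inner (c i) (e i) \<le> norm (c i) * norm (e i)"
      using Cauchy_Schwarz_ineq2[of "c i" "e i"] by linarith
    also have "\<dots> \<le> norm (c i) * E" using eE by (intro mult_left_mono) auto
    finally have "- inner (c i) (e i) \<le> norm (c i) * E" .
    hence "2 * \<alpha> k * (- inner (c i) (e i)) \<le> 2 * \<alpha> k * (norm (c i) * E)"
      using apos by (intro mult_left_mono) auto
    hence l1: "- (2 * \<alpha> k * inner (c i) (e i)) \<le> 2 * (\<alpha> k * norm (c i)) * E"
      by (simp only: mult_minus_right mult.assoc)
    have l2: "2 * (\<alpha> k * norm (c i)) * E = (\<Sum>j<m+1. 2 * (\<alpha> k * norm (c i)) * norm (ph k (Suc j) - ph k j))"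
      unfolding E_def by (rule sum_distrib_left)
    have l3: "(\<Sum>j<m+1. 2 * (\<alpha> k * norm (c i)) * norm (ph k (Suc j) - ph k j))
        \<le> (\<Sum>j<m+1. (\<alpha> k * norm (c i))\<^sup>2 / \<delta> + \<delta> * (norm (ph k (Suc j) - ph k j))\<^sup>2)"
      by (intro sum_mono amgm dpos)
    have l4: "(\<Sum>j<m+1. (\<alpha> k * norm (c i))\<^sup>2 / \<delta> + \<delta> * (norm (ph k (Suc j) - ph k j))\<^sup>2)
        = (\<Sum>j<m+1. (\<alpha> k * norm (c i))\<^sup>2 / \<delta>) + (\<Sum>j<m+1. \<delta> * (norm (ph k (Suc j) - ph k j))\<^sup>2)"
      by (rule sum.distrib)
    have l5: "(\<Sum>j<m+1. (\<alpha> k * norm (c i))\<^sup>2 / \<delta>) = K * (norm (c i))\<^sup>2"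
    proof -
      have "(\<Sum>j<m+1. (\<alpha> k * norm (c i))\<^sup>2 / \<delta>) = real (m+1) * ((\<alpha> k * norm (c i))\<^sup>2 / \<delta>)"
        by (simp only: sum_constant card_lessThan of_nat_id)
      also have "\<dots> = K * (norm (c i))\<^sup>2" unfolding K_def by (simp add: power_mult_distrib)
      finally show ?thesis .
    qed
    have l6: "(\<Sum>j<m+1. \<delta> * (norm (ph k (Suc j) - ph k j))\<^sup>2) = \<delta> * Dk k"
      unfolding Dk_def by (rule sum_distrib_left[symmetric])
    show ?thesis using l1 l2 l3 l4 l5 l6 by linarith
  qed
  have s1: "2 * \<alpha> k * (\<Sum>i\<in>{1..m}. inner (c i) (e i)) = (\<Sum>i\<in>{1..m}. 2 * \<alpha> k * inner (c i) (e i))"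
    by (rule sum_distrib_left)
  have s2: "(\<Sum>i\<in>{1..m}. - (K * (norm (c i))\<^sup>2 + \<delta> * Dk k)) \<le> (\<Sum>i\<in>{1..m}. 2 * \<alpha> k * inner (c i) (e i))"
    by (rule sum_mono) (rule eb)
  have s3: "(\<Sum>i\<in>{1..m}. - (K * (norm (c i))\<^sup>2 + \<delta> * Dk k)) = - (K * C + m * \<delta> * Dk k)"
  proof -
    have "(\<Sum>i\<in>{1..m}. - (K * (norm (c i))\<^sup>2 + \<delta> * Dk k)) = - (\<Sum>i\<in>{1..m}. K * (norm (c i))\<^sup>2 + \<delta> * Dk k)"
      by (rule sum_negf)
    also have "(\<Sum>i\<in>{1..m}. K * (norm (c i))\<^sup>2 + \<delta> * Dk k) = (\<Sum>i\<in>{1..m}. K * (norm (c i))\<^sup>2) + (\<Sum>i\<in>{1..m}. \<delta> * Dk k)"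
      by (rule sum.distrib)
    also have "(\<Sum>i\<in>{1..m}. K * (norm (c i))\<^sup>2) = K * C" unfolding C_def by (rule sum_distrib_left[symmetric])
    also have "(\<Sum>i\<in>{1..m}. \<delta> * Dk k) = m * \<delta> * Dk k" by simp
    finally show ?thesis .
  qed
  have fen: "2 * \<alpha> k * inner p (x k - z) \<le> \<gamma> k * \<theta> * g (x k) + \<gamma> k * \<theta> * t"
  proof -
    have "inner (((2/\<theta>) *\<^sub>R p) /\<^sub>R \<beta> k) (x k - z) - g (x k) \<le> t" by (rule tk)
    hence "\<gamma> k * \<theta> * (inner (((2/\<theta>) *\<^sub>R p) /\<^sub>R \<beta> k) (x k - z) - g (x k)) \<le> \<gamma> k * \<theta> * t"
      using apos bpos th unfolding \<gamma>_def by (intro mult_left_mono) auto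
    moreover have "\<gamma> k * \<theta> * inner (((2/\<theta>) *\<^sub>R p) /\<^sub>R \<beta> k) (x k - z) = 2 * \<alpha> k * inner p (x k - z)"
    proof -
      have "inner (((2/\<theta>) *\<^sub>R p) /\<^sub>R \<beta> k) (x k - z) = (2/\<theta>) / \<beta> k * inner p (x k - z)"
        by (simp add: divide_inverse)
      thus ?thesis unfolding \<gamma>_def using bpos th by simp
    qed
    ultimately show ?thesis by (simp only: right_diff_distrib)
  qed
  have main: "- (2 * \<alpha> k * inner p (x k - z)) + 2 * \<alpha> k * (\<Sum>i\<in>{1..m}. inner (c i) (e i)) \<le> 2 * \<alpha> k * (Fphi k - Fs z)"
  proof -
    have "2 * \<alpha> k * (- inner p (x k - z) + (\<Sum>i\<in>{1..m}. inner (c i) (e i))) \<le> 2 * \<alpha> k * (Fphi k - Fs z)"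
      using r1 r2 apos by (intro mult_left_mono) auto
    thus ?thesis by (simp only: distrib_left mult_minus_right)
  qed
  have KC: "(m+1) * (\<alpha> k)\<^sup>2 * (\<Sum>i\<in>{1..m}. (norm (u i + gradh i z))\<^sup>2) / (\<theta> / (4 * m)) = K * C"
    unfolding K_def C_def c_def \<delta>_def by simp
  have s3': "(\<Sum>i\<in>{1..m}. - (K * (norm (c i))\<^sup>2 + \<delta> * Dk k)) = - (K * C + \<theta> / 4 * Dk k)"
    using s3 unfolding md .
  show ?thesis unfolding KC using main s1 s2 s3' fen by linarith
qed

end

context setting begin

lemma multipliers:
  assumes zS: "z \<in> S"
  obtains u p where "\<And>i y. i \<in> {1..m} \<Longrightarrow> f i z + inner (u i) (y - z) \<le> f i y"
    "p \<in> normal_cone A z" "(\<Sum>i\<in>{1..m}. u i) + p = - (\<Sum>i\<in>{1..m}. gradh i z)"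
proof -
  have zA: "z \<in> A" and zmin: "\<forall>y\<in>A. (\<Sum>i\<in>{1..m}. f i z + h i z) \<le> (\<Sum>i\<in>{1..m}. f i y + h i y)"
    using zS unfolding S_def Fs_def by auto
  have "- (\<Sum>i\<in>{1..m}. gradh i z) \<in> subdiff (\<lambda>z. (\<Sum>i\<in>{1..m}. ereal (f i z)) + indicator_fun A z) z"
    by (rule optimality[OF f_convex h_grad A_convex zA zmin])
  then obtain u p where up: "- (\<Sum>i\<in>{1..m}. gradh i z) = (\<Sum>i\<in>{1..m}. u i) + p"
    "\<forall>i\<in>{1..m}. u i \<in> subdiff (\<lambda>z. ereal (f i z)) z" "p \<in> normal_cone A z"
    unfolding H1 by blast
  show ?thesis
  proof (rule that[of u p])
    fix i y assume i: "i \<in> {1..m}"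
    hence "ereal (f i z) + ereal (inner (u i) (y - z)) \<le> ereal (f i y)"
      using up(2) unfolding subdiff_def by blast
    thus "f i z + inner (u i) (y - z) \<le> f i y" by simp
  qed (use up in auto)
qed

lemma tterms:
  assumes q: "q \<in> normal_cone A z"
  obtains t where "\<And>k. k \<ge> 1 \<Longrightarrow> 0 \<le> t k"
    "\<And>k y. k \<ge> 1 \<Longrightarrow> inner (q /\<^sub>R \<beta> k) (y - z) - g y \<le> t k"
    "summable (\<lambda>k. \<gamma> (k+1) * t (k+1))"
proof -
  have zA: "z \<in> A" using q unfolding normal_cone_def by (auto split: if_splits)
  have gz: "g z = 0" using zA A_iff by simp
  define T where "T k = fenchel_conj g (q /\<^sub>R \<beta> k) - support_fun A (q /\<^sub>R \<beta> k)" for k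
  have nck: "q /\<^sub>R \<beta> k \<in> normal_cone A z" if "k \<ge> 1" for k
    using normal_cone_scale[OF q, of "inverse (\<beta> k)"] \<beta>_pos[OF that] by simp
  have cs: "T k = \<infinity> \<or> (\<exists>t. T k = ereal t \<and> 0 \<le> t \<and> (\<forall>y. inner (q /\<^sub>R \<beta> k) (y - z) - g y \<le> t))"
    if "k \<ge> 1" for k unfolding T_def by (rule fench[where g=g and z=z, OF nck[OF that] gz])
  have T0: "0 \<le> T k" if "k \<ge> 1" for k using cs[OF that] by auto
  have qr: "q \<in> normal_cone_range A" unfolding normal_cone_range_def using q zA by blast
  define \<tau> where "\<tau> k = ereal (\<gamma> (k+1)) * T (k+1)" for k
  have gp: "\<gamma> k > 0" if "k \<ge> 1" for k unfolding \<gamma>_def using \<alpha>_pos \<beta>_pos that by simp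
  have tau0: "0 \<le> \<tau> k" for k unfolding \<tau>_def using gp[of "k+1"] T0[of "k+1"] by (simp add: ereal_zero_le_0_iff)
  have Hq: "suminf \<tau> < \<infinity>" using H4[OF qr] unfolding \<tau>_def \<gamma>_def T_def by simp
  have fin: "T (k+1) \<noteq> \<infinity>" for k
  proof
    assume inf: "T (k+1) = \<infinity>"
    hence "\<tau> k = \<infinity>" unfolding \<tau>_def using gp[of "k+1"] by simp
    have "\<tau> k \<le> (\<Sum>n<k. \<tau> n) + \<tau> k"
      by (rule add_increasing) (auto intro: sum_nonneg tau0)
    also have "\<dots> = (\<Sum>n<Suc k. \<tau> n)" by simp
    also have "\<dots> \<le> suminf \<tau>" by (rule suminf_upper) (rule tau0)
    finally show False using \<open>\<tau> k = \<infinity>\<close> Hq by simp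
  qed
  define t where "t k = real_of_ereal (T k)" for k
  have Tt: "T k = ereal (t k) \<and> 0 \<le> t k \<and> (\<forall>y. inner (q /\<^sub>R \<beta> k) (y - z) - g y \<le> t k)" if k: "k \<ge> 1" for k
  proof -
    have "T k \<noteq> \<infinity>" using fin[of "k - 1"] k by simp
    thus ?thesis using cs[OF k] unfolding t_def by auto
  qed
  show ?thesis
  proof (rule that[of t])
    show "\<And>k. 1 \<le> k \<Longrightarrow> 0 \<le> t k" using Tt by blast
    show "\<And>k y. 1 \<le> k \<Longrightarrow> inner (q /\<^sub>R \<beta> k) (y - z) - g y \<le> t k" using Tt by blast
    have tau_eq: "\<tau> k = ereal (\<gamma> (k+1) * t (k+1))" for k
      unfolding \<tau>_def using Tt[of "k+1"] by simp
    have nn: "0 \<le> \<gamma> (k+1) * t (k+1)" for k using gp[of "k+1"] Tt[of "k+1"] by simp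
    show "summable (\<lambda>k. \<gamma> (k+1) * t (k+1))"
    proof (rule summable_ereal[OF nn])
      have "\<tau> = (\<lambda>k. ereal (\<gamma> (k+1) * t (k+1)))" using tau_eq by auto
      thus "(\<Sum>k. ereal (\<gamma> (k+1) * t (k+1))) \<noteq> \<infinity>" using Hq by simp
    qed
  qed
qed

end

lemma shift1: assumes "K0 \<ge> (1::nat)" and "summable (\<lambda>k. w (k+1) :: real)" shows "summable (\<lambda>n. w (n + K0))"
proof -
  have "summable (\<lambda>n. (\<lambda>k. w (k+1)) (n + (K0 - 1)))" using assms(2) by (subst summable_iff_shift)
  moreover have "(\<lambda>n. (\<lambda>k. w (k+1)) (n + (K0 - 1))) = (\<lambda>n. w (n + K0))" using assms(1) by auto
  ultimately show ?thesis by simp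
qed

context setting begin

lemma Dk_bound: "norm (\<phi> (i+1) k - x k) \<le> (m+1) * sqrt (Dk k)" if "i \<le> m"
proof -
  have "norm (\<phi> (i+1) k - x k) \<le> (\<Sum>j<m+1. norm (ph k (Suc j) - ph k j))" by (rule e_bound[OF that])
  also have "\<dots> \<le> (\<Sum>j<m+1. sqrt (Dk k))"
  proof (rule sum_mono)
    fix j assume j: "j \<in> {..<m+1}"
    have "(norm (ph k (Suc j) - ph k j))\<^sup>2 \<le> Dk k" unfolding Dk_def
      using j by (intro member_le_sum) auto
    hence "sqrt ((norm (ph k (Suc j) - ph k j))\<^sup>2) \<le> sqrt (Dk k)" by (rule real_sqrt_le_mono)
    thus "norm (ph k (Suc j) - ph k j) \<le> sqrt (Dk k)" by simp
  qed
  also have "\<dots> = (m+1) * sqrt (Dk k)" by simp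
  finally show ?thesis .
qed

lemma fejer:
  assumes zS: "z \<in> S"
  shows "convergent (\<lambda>k. (norm (x k - z))\<^sup>2)"
    and "\<forall>\<eta>>0. \<forall>N. \<exists>k\<ge>N. Fphi k < Fs z + \<eta>"
    and "(\<lambda>k. g (x k)) \<longlonglongrightarrow> 0"
    and "\<And>i. i \<le> m \<Longrightarrow> (\<lambda>k. \<phi> (i+1) k - x k) \<longlonglongrightarrow> 0"
proof -
  obtain \<theta> K0 \<gamma>0 where th: "0 < \<theta>" "\<theta> \<le> 1/2" and K0: "K0 \<ge> 1" and g0: "\<gamma>0 > 0"
    and KK: "\<And>k. k \<ge> K0 \<Longrightarrow> \<gamma> k \<le> 2 * (1 - \<theta>) / Lg \<and> \<gamma>0 \<le> \<gamma> k \<and> \<alpha> k * Ls \<le> 1/4"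
    using constants by blast
  obtain u p where usub: "\<And>i y. i \<in> {1..m} \<Longrightarrow> f i z + inner (u i) (y - z) \<le> f i y"
    and pN: "p \<in> normal_cone A z" and psum: "(\<Sum>i\<in>{1..m}. u i) + p = - (\<Sum>i\<in>{1..m}. gradh i z)"
    using multipliers[OF zS] by blast
  have zA: "z \<in> A" using zS unfolding S_def by auto
  define q where "q = (2/\<theta>) *\<^sub>R p"
  have qN: "q \<in> normal_cone A z" unfolding q_def using th by (intro normal_cone_scale[OF pN]) auto
  obtain t where t0: "\<And>k. k \<ge> 1 \<Longrightarrow> 0 \<le> t k"
    and tk: "\<And>k y. k \<ge> 1 \<Longrightarrow> inner (q /\<^sub>R \<beta> k) (y - z) - g y \<le> t k"
    and ts: "summable (\<lambda>k. \<gamma> (k+1) * t (k+1))"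
    using tterms[OF qN] by blast
  define C' where "C' = (\<Sum>i\<in>{1..m}. (norm (u i + gradh i z))\<^sup>2)"
  define \<epsilon> where "\<epsilon> k = \<gamma> k * \<theta> * t k + (m+1) * (\<alpha> k)\<^sup>2 * C' / (\<theta> / (4 * m))" for k
  define a where "a k = (norm (x k - z))\<^sup>2" for k
  define bb where "bb k = \<gamma> k * \<theta> * g (x k) + 2 * \<alpha> k * (Fphi k - Fs z) + \<theta> / 4 * Dk k + \<epsilon> k" for k
  have gp: "\<gamma> k > 0" if "k \<ge> 1" for k unfolding \<gamma>_def using \<alpha>_pos \<beta>_pos that by simp
  have main: "a (k+1) \<le> a k - 2 * \<gamma> k * \<theta> * g (x k) - 2 * \<alpha> k * (Fphi k - Fs z) - \<theta> / 2 * Dk k"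
    if k: "k \<ge> K0" for k
    unfolding a_def using KK[OF k] K0 k th by (intro step_main zA) auto
  have low: "0 \<le> bb k" if k: "k \<ge> K0" for k
    unfolding bb_def \<epsilon>_def C'_def
    by (rule step_lower[OF _ th(1) zA usub psum]) (use k K0 tk[of k, unfolded q_def] in auto)
  have eps0: "0 \<le> \<epsilon> k" if "k \<ge> 1" for k
    unfolding \<epsilon>_def C'_def using gp[OF that] th t0[OF that] m
    by (intro add_nonneg_nonneg mult_nonneg_nonneg divide_nonneg_pos sum_nonneg) auto
  define a' where "a' n = a (n + K0)" for n
  define c' where "c' n = bb (n + K0) + \<gamma> (n + K0) * \<theta> * g (x (n + K0)) + \<theta> / 4 * Dk (n + K0)" for n
  define e' where "e' n = \<epsilon> (n + K0)" for n
  have gnn: "0 \<le> \<gamma> (n + K0) * \<theta> * g (x (n + K0))" for n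
    using gp[of "n + K0"] K0 th g_nonneg by simp
  have Dnn: "0 \<le> \<theta> / 4 * Dk k" for k using th Dk_nonneg by simp
  have es: "summable e'"
  proof -
    have s1: "summable (\<lambda>n. \<gamma> (n + K0) * t (n + K0))" by (rule shift1[OF K0 ts])
    have s2: "summable (\<lambda>n. (\<alpha> (n + K0))\<^sup>2)" by (rule shift1[OF K0 H2(2)])
    have "summable (\<lambda>n. \<theta> * (\<gamma> (n + K0) * t (n + K0)) + ((m+1) * C' / (\<theta> / (4 * m))) * (\<alpha> (n + K0))\<^sup>2)"
      by (intro summable_add summable_mult s1 s2)
    moreover have "(\<lambda>n. \<theta> * (\<gamma> (n + K0) * t (n + K0)) + ((m+1) * C' / (\<theta> / (4 * m))) * (\<alpha> (n + K0))\<^sup>2) = e'"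
      unfolding e'_def \<epsilon>_def by (auto simp: fun_eq_iff algebra_simps)
    ultimately show ?thesis by simp
  qed
  have qf: "convergent a'" "summable c'"
  proof -
    have st: "a' (Suc n) \<le> a' n - c' n + e' n" for n
      using main[of "n + K0"] unfolding a'_def c'_def e'_def bb_def by (simp add: algebra_simps)
    show "convergent a'" "summable c'"
      by (rule qfejer[of a' c' e', OF _ _ _ es st];
          use low gnn Dnn eps0 K0 in \<open>auto simp: a'_def a_def c'_def e'_def intro!: add_nonneg_nonneg\<close>)+
  qed
  show "convergent (\<lambda>k. (norm (x k - z))\<^sup>2)"
  proof -
    obtain l where "a' \<longlonglongrightarrow> l" using qf(1) unfolding convergent_def by blast
    hence "a \<longlonglongrightarrow> l" unfolding a'_def by (rule LIMSEQ_offset)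
    thus ?thesis unfolding a_def convergent_def by blast
  qed
  have sbb: "summable (\<lambda>n. bb (n + K0))"
    by (rule summable_comparison_test'[OF qf(2), of 0]) (use low gnn Dnn K0 in \<open>auto simp: c'_def\<close>)
  have sg: "summable (\<lambda>n. \<gamma> (n + K0) * \<theta> * g (x (n + K0)))"
    by (rule summable_comparison_test'[OF qf(2), of 0]) (use low gnn Dnn K0 in \<open>auto simp: c'_def\<close>)
  have sD: "summable (\<lambda>n. \<theta> / 4 * Dk (n + K0))"
    by (rule summable_comparison_test'[OF qf(2), of 0]) (use low gnn Dnn K0 in \<open>auto simp: c'_def\<close>)
  show "(\<lambda>k. g (x k)) \<longlonglongrightarrow> 0"
  proof -
    have l: "(\<lambda>n. \<gamma> (n + K0) * \<theta> * g (x (n + K0))) \<longlonglongrightarrow> 0" by (rule summable_LIMSEQ_zero[OF sg])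
    have "(\<lambda>n. (\<gamma> (n + K0) * \<theta> * g (x (n + K0))) / (\<gamma>0 * \<theta>)) \<longlonglongrightarrow> 0 / (\<gamma>0 * \<theta>)"
      by (intro tendsto_divide l tendsto_const) (use g0 th in auto)
    hence l2: "(\<lambda>n. (\<gamma> (n + K0) * \<theta> * g (x (n + K0))) / (\<gamma>0 * \<theta>)) \<longlonglongrightarrow> 0" by simp
    have "(\<lambda>n. g (x (n + K0))) \<longlonglongrightarrow> 0"
    proof (rule tendsto_sandwich[OF _ _ tendsto_const l2])
      show "\<forall>\<^sub>F n in sequentially. 0 \<le> g (x (n + K0))" using g_nonneg by simp
      show "\<forall>\<^sub>F n in sequentially. g (x (n + K0)) \<le> \<gamma> (n + K0) * \<theta> * g (x (n + K0)) / (\<gamma>0 * \<theta>)"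
      proof (rule always_eventually, rule allI)
        fix n
        have "\<gamma>0 \<le> \<gamma> (n + K0)" using KK[of "n + K0"] by simp
        hence "\<gamma>0 * \<theta> * g (x (n + K0)) \<le> \<gamma> (n + K0) * \<theta> * g (x (n + K0))"
          using th g_nonneg by (intro mult_right_mono) auto
        thus "g (x (n + K0)) \<le> \<gamma> (n + K0) * \<theta> * g (x (n + K0)) / (\<gamma>0 * \<theta>)"
          using g0 th by (simp add: pos_le_divide_eq mult.commute mult.left_commute)
      qed
    qed
    thus ?thesis by (rule LIMSEQ_offset)
  qed
  show "(\<lambda>k. \<phi> (i+1) k - x k) \<longlonglongrightarrow> 0" if i: "i \<le> m" for i
  proof -
    have "(\<lambda>n. \<theta> / 4 * Dk (n + K0)) \<longlonglongrightarrow> 0" by (rule summable_LIMSEQ_zero[OF sD])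
    hence "(\<lambda>n. (4 / \<theta>) * (\<theta> / 4 * Dk (n + K0))) \<longlonglongrightarrow> (4 / \<theta>) * 0" by (intro tendsto_mult tendsto_const)
    hence "(\<lambda>n. Dk (n + K0)) \<longlonglongrightarrow> 0" using th by simp
    hence "(\<lambda>n. (m+1) * sqrt (Dk (n + K0))) \<longlonglongrightarrow> (m+1) * sqrt 0" by (intro tendsto_intros)
    hence l: "(\<lambda>n. (m+1) * sqrt (Dk (n + K0))) \<longlonglongrightarrow> 0" by simp
    have "(\<lambda>n. norm (\<phi> (i+1) (n + K0) - x (n + K0))) \<longlonglongrightarrow> 0"
      by (rule tendsto_sandwich[OF _ _ tendsto_const l]) (use Dk_bound[OF i] in auto)
    hence "(\<lambda>n. \<phi> (i+1) (n + K0) - x (n + K0)) \<longlonglongrightarrow> 0" by (simp add: tendsto_norm_zero_iff)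
    thus ?thesis by (rule LIMSEQ_offset[where f="\<lambda>k. \<phi> (i+1) k - x k"])
  qed
  show "\<forall>\<eta>>0. \<forall>N. \<exists>k\<ge>N. Fphi k < Fs z + \<eta>"
  proof (rule ccontr)
    assume "\<not> ?thesis"
    then obtain \<eta> N where eta: "\<eta> > 0" and big: "\<And>k. k \<ge> N \<Longrightarrow> Fphi k \<ge> Fs z + \<eta>"
      by (auto simp: not_less)
    have "summable (\<lambda>n. \<alpha> (n + K0))"
    proof (rule summable_comparison_test'[of "\<lambda>n. bb (n + K0) / (2 * \<eta>)" N])
      show "summable (\<lambda>n. bb (n + K0) / (2 * \<eta>))" by (intro summable_divide sbb)
      fix n assume n: "n \<ge> N"
      have a0: "\<alpha> (n + K0) > 0" using \<alpha>_pos K0 by simp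
      have "2 * \<alpha> (n + K0) * \<eta> \<le> 2 * \<alpha> (n + K0) * (Fphi (n + K0) - Fs z)"
        using big[of "n + K0"] n a0 by (intro mult_left_mono) auto
      moreover have "0 \<le> \<gamma> (n + K0) * \<theta> * g (x (n + K0))" by (rule gnn)
      moreover have "0 \<le> \<theta> / 4 * Dk (n + K0)" by (rule Dnn)
      moreover have "0 \<le> \<epsilon> (n + K0)" using eps0 K0 by simp
      ultimately have "2 * \<eta> * \<alpha> (n + K0) \<le> bb (n + K0)" unfolding bb_def by (simp add: algebra_simps)
      hence "\<alpha> (n + K0) \<le> bb (n + K0) / (2 * \<eta>)" using eta by (simp add: pos_le_divide_eq mult.commute)
      thus "norm (\<alpha> (n + K0)) \<le> bb (n + K0) / (2 * \<eta>)" using a0 by simp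
    qed
    hence "summable (\<lambda>k. \<alpha> (k + 1))"
    proof -
      assume s: "summable (\<lambda>n. \<alpha> (n + K0))"
      have "summable (\<lambda>n. \<alpha> (n + (K0 - 1) + 1))" using s K0 by (simp add: add.assoc)
      thus ?thesis by (subst (asm) summable_iff_shift[of "\<lambda>k. \<alpha> (k+1)" "K0 - 1"])
    qed
    thus False using H2(1) by simp
  qed
qed

end

context setting begin

lemma conv: "\<exists>z\<in>S. x \<longlonglongrightarrow> z"
proof -
  obtain z0 where z0: "z0 \<in> S" using S_nonempty unfolding S_def Fs_def by blast
  have liminf: "\<forall>\<eta>>0. \<forall>N. \<exists>k\<ge>N. Fphi k < Fs z0 + \<eta>" by (rule fejer(2)[OF z0])
  define \<kappa> where "\<kappa> j = (SOME k. k \<ge> j \<and> Fphi k < Fs z0 + 1 / (real j + 1))" for j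
  have \<kappa>: "\<kappa> j \<ge> j \<and> Fphi (\<kappa> j) < Fs z0 + 1 / (real j + 1)" for j
  proof -
    have "\<exists>k\<ge>j. Fphi k < Fs z0 + 1 / (real j + 1)" using liminf by simp
    thus ?thesis unfolding \<kappa>_def by (rule someI_ex[where P="\<lambda>k. k \<ge> j \<and> Fphi k < Fs z0 + 1 / (real j + 1)", simplified])
  qed
  obtain B where B: "\<And>k. (norm (x k - z0))\<^sup>2 \<le> B"
  proof -
    have "Bseq (\<lambda>k. (norm (x k - z0))\<^sup>2)" by (rule convergent_imp_Bseq[OF fejer(1)[OF z0]])
    then obtain B where "\<And>k. norm ((norm (x k - z0))\<^sup>2) \<le> B" unfolding Bseq_def by blast
    hence "\<And>k. (norm (x k - z0))\<^sup>2 \<le> B" by simp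
    thus ?thesis by (rule that)
  qed
  have xb: "norm (x k) \<le> norm z0 + max 1 B" for k
  proof -
    have "norm (x k - z0) \<le> max 1 B"
    proof (cases "norm (x k - z0) \<le> 1")
      case True thus ?thesis by simp
    next
      case False
      hence "1 * norm (x k - z0) \<le> norm (x k - z0) * norm (x k - z0)" by (intro mult_right_mono) auto
      hence "norm (x k - z0) \<le> (norm (x k - z0))\<^sup>2" by (simp add: power2_eq_square)
      thus ?thesis using B[of k] by simp
    qed
    moreover have "norm (x k) \<le> norm z0 + norm (x k - z0)" using norm_triangle_ineq[of z0 "x k - z0"] by simp
    ultimately show ?thesis by simp
  qed
  have "bounded (range (x \<circ> \<kappa>))" unfolding bounded_iff using xb by auto
  then obtain xbar r where r: "strict_mono r" and lim: "((x \<circ> \<kappa>) \<circ> r) \<longlonglongrightarrow> xbar"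
    using bounded_imp_convergent_subsequence by blast
  define s where "s = \<kappa> \<circ> r"
  have sj: "s j \<ge> j" for j using \<kappa>[of "r j"] seq_suble[OF r, of j] unfolding s_def by simp
  have sf: "filterlim s at_top sequentially"
    unfolding filterlim_at_top eventually_sequentially using sj le_trans by blast
  have xs: "(\<lambda>j. x (s j)) \<longlonglongrightarrow> xbar" using lim unfolding s_def by (simp add: o_def)
  have gxs: "(\<lambda>j. g (x (s j))) \<longlonglongrightarrow> 0"
    using filterlim_compose[OF fejer(3)[OF z0] sf] by simp
  have "(\<lambda>j. g (x (s j))) \<longlonglongrightarrow> g xbar"
    using continuous_on_tendsto_compose[OF g_cont xs] by simp
  hence "g xbar = 0" using gxs LIMSEQ_unique by blast
  hence xbA: "xbar \<in> A" using A_iff by simp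
  have phis: "(\<lambda>j. \<phi> (i+1) (s j)) \<longlonglongrightarrow> xbar" if i: "i \<le> m" for i
  proof -
    have "(\<lambda>j. \<phi> (i+1) (s j) - x (s j)) \<longlonglongrightarrow> 0"
      using filterlim_compose[OF fejer(4)[OF z0 i] sf] by simp
    hence "(\<lambda>j. (\<phi> (i+1) (s j) - x (s j)) + x (s j)) \<longlonglongrightarrow> 0 + xbar" by (intro tendsto_add xs)
    thus ?thesis by simp
  qed
  have "(\<lambda>j. Fphi (s j)) \<longlonglongrightarrow> Fs xbar"
    unfolding Fphi_def Fs_def
  proof (intro tendsto_sum tendsto_add)
    fix i assume i: "i \<in> {1..m}"
    hence im: "i \<le> m" by simp
    show "(\<lambda>j. f i (\<phi> (i+1) (s j))) \<longlonglongrightarrow> f i xbar"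
      using continuous_on_tendsto_compose[OF f_cont[OF i] phis[OF im]] by simp
    show "(\<lambda>j. h i (\<phi> (i+1) (s j))) \<longlonglongrightarrow> h i xbar"
      using continuous_on_tendsto_compose[OF h_cont[OF i] phis[OF im]] by simp
  qed
  moreover have "(\<lambda>j. Fs z0 + 1 / (real j + 1)) \<longlonglongrightarrow> Fs z0 + 0"
  proof -
    have "(\<lambda>j. inverse (real (Suc j))) \<longlonglongrightarrow> 0" by (rule LIMSEQ_inverse_real_of_nat)
    hence i0: "(\<lambda>j. 1 / (real j + 1)) \<longlonglongrightarrow> 0" by (simp add: inverse_eq_divide add.commute)
    show ?thesis by (intro tendsto_add tendsto_const i0)
  qed
  moreover have "Fphi (s j) \<le> Fs z0 + 1 / (real j + 1)" for j
  proof -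
    have "Fphi (s j) < Fs z0 + 1 / (real (r j) + 1)" using \<kappa>[of "r j"] unfolding s_def by simp
    moreover have "1 / (real (r j) + 1) \<le> 1 / (real j + 1)"
      using seq_suble[OF r, of j] by (intro divide_left_mono) auto
    ultimately show ?thesis by simp
  qed
  ultimately have "Fs xbar \<le> Fs z0 + 0" by (intro tendsto_le[OF _ _ _ always_eventually]) auto
  hence xbS: "xbar \<in> S" using z0 xbA unfolding S_def by auto
  obtain l where l: "(\<lambda>k. (norm (x k - xbar))\<^sup>2) \<longlonglongrightarrow> l"
    using fejer(1)[OF xbS] unfolding convergent_def by blast
  have "(\<lambda>j. (norm (x (s j) - xbar))\<^sup>2) \<longlonglongrightarrow> l" using filterlim_compose[OF l sf] by simp
  moreover have "(\<lambda>j. (norm (x (s j) - xbar))\<^sup>2) \<longlonglongrightarrow> (norm (xbar - xbar))\<^sup>2"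
    by (intro tendsto_intros xs)
  ultimately have "l = (norm (xbar - xbar))\<^sup>2" by (rule LIMSEQ_unique)
  hence "l = 0" by simp
  hence "(\<lambda>k. sqrt ((norm (x k - xbar))\<^sup>2)) \<longlonglongrightarrow> sqrt 0" using l by (intro tendsto_intros) simp
  hence "(\<lambda>k. norm (x k - xbar)) \<longlonglongrightarrow> 0" by simp
  hence "(\<lambda>k. x k - xbar) \<longlonglongrightarrow> 0" by (simp add: tendsto_norm_zero_iff)
  hence "x \<longlonglongrightarrow> xbar" by (rule LIM_zero_cancel)
  thus ?thesis using xbS by blast
qed

end

theorem theorem2p1:
  fixes m :: nat
    and f h :: "nat \<Rightarrow> 'a::euclidean_space \<Rightarrow> real"
    and gradh :: "nat \<Rightarrow> 'a \<Rightarrow> 'a"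
    and L :: "nat \<Rightarrow> real"
    and g :: "'a \<Rightarrow> real" and gradg :: "'a \<Rightarrow> 'a" and Lg :: real
    and \<alpha> \<beta> :: "nat \<Rightarrow> real"
    and x :: "nat \<Rightarrow> 'a"
    and \<phi> :: "nat \<Rightarrow> nat \<Rightarrow> 'a"
  assumes m: "m \<ge> 1"
    and f_convex: "\<And>i. i \<in> {1..m} \<Longrightarrow> convex_on UNIV (f i)"
    and h_convex: "\<And>i. i \<in> {1..m} \<Longrightarrow> convex_on UNIV (h i)"
    and h_grad: "\<And>i y. i \<in> {1..m} \<Longrightarrow> GDERIV (h i) y :> gradh i y"
    and h_lip: "\<And>i. i \<in> {1..m} \<Longrightarrow> L i > 0 \<and> (L i)-lipschitz_on UNIV (gradh i)"
    and g_convex: "convex_on UNIV g"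
    and g_grad: "\<And>y. GDERIV g y :> gradg y"
    and g_lip: "Lg > 0" "Lg-lipschitz_on UNIV gradg"
    and g_min: "(\<exists>y. g y = 0) \<and> (\<forall>y. 0 \<le> g y)"
    and S_nonempty:
      "{z \<in> argmin_set g. \<forall>y \<in> argmin_set g.
          (\<Sum>i\<in>{1..m}. f i z + h i z) \<le> (\<Sum>i\<in>{1..m}. f i y + h i y)} \<noteq> {}"
    and \<alpha>_pos: "\<And>k. k \<ge> 1 \<Longrightarrow> \<alpha> k > 0"
    and \<beta>_pos: "\<And>k. k \<ge> 1 \<Longrightarrow> \<beta> k > 0"
    and phi_1: "\<And>k. k \<ge> 1 \<Longrightarrow> \<phi> 1 k = x k - (\<alpha> k * \<beta> k) *\<^sub>R gradg (x k)"
    and phi_step: "\<And>i k. k \<ge> 1 \<Longrightarrow> i \<in> {1..m} \<Longrightarrow>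
        \<phi> (i + 1) k = prox (\<alpha> k) (f i) (\<phi> i k - \<alpha> k *\<^sub>R gradh i (\<phi> i k))"
    and x_step: "\<And>k. k \<ge> 1 \<Longrightarrow> x (k + 1) = \<phi> (m + 1) k"
    and H1: "\<And>y. subdiff (\<lambda>z. (\<Sum>i\<in>{1..m}. ereal (f i z)) + indicator_fun (argmin_set g) z) y
        = {(\<Sum>i\<in>{1..m}. u i) + p | u p. (\<forall>i\<in>{1..m}. u i \<in> subdiff (\<lambda>z. ereal (f i z)) y)
              \<and> p \<in> normal_cone (argmin_set g) y}"
    and H2: "\<not> summable (\<lambda>k. \<alpha> (k + 1))" "summable (\<lambda>k. (\<alpha> (k + 1))\<^sup>2)"
    and H3: "0 < liminf (\<lambda>k. ereal (\<alpha> k * \<beta> k))"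
            "limsup (\<lambda>k. ereal (\<alpha> k * \<beta> k)) < ereal (2 / Lg)"
    and H4: "\<And>p. p \<in> normal_cone_range (argmin_set g) \<Longrightarrow>
        (\<Sum>k. ereal (\<alpha> (k + 1) * \<beta> (k + 1)) *
            (fenchel_conj g (p /\<^sub>R \<beta> (k + 1)) - support_fun (argmin_set g) (p /\<^sub>R \<beta> (k + 1)))) < \<infinity>"
  shows "\<exists>z \<in> {z \<in> argmin_set g. \<forall>y \<in> argmin_set g.
          (\<Sum>i\<in>{1..m}. f i z + h i z) \<le> (\<Sum>i\<in>{1..m}. f i y + h i y)}. x \<longlonglongrightarrow> z"
proof -
  interpret setting m f h gradh L g gradg Lg \<alpha> \<beta> x \<phi>
    by unfold_locales fact+
  have "\<exists>z\<in>S. x \<longlonglongrightarrow> z" by (rule conv)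
  thus ?thesis unfolding S_def Fs_def .
qed

end
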